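(* Let $H$ be a finite horizon (possibly with mass at zero) with $\mu:=\mathbb{E}H<\infty$, and let $m:=\sup\operatorname{supp}(H)\in\mathbb{N}\cup\{\infty\}$. Then: (a) $\mathcal{V}(\mathbf{Y})=\mathcal{V}(\mathbf{Z})$; (b) there exists $\bar\zeta\in\mathcal{T}$ such that $\mathbb{E}Z_{\bar\zeta}=\mathcal{V}(\mathbf{Z})$; (c) $\bar\tau:=\bar\zeta\wedge(H+1)$ satisfies $\mathbb{E}Y_{\bar\tau}=\mathcal{V}(\mathbf{Y})$. Moreover, $\bar\zeta$ can be taken to be the backward induction stopping rule for $Z_0,Z_1,\dots,Z_m$ if $m<\infty$, and the Snell rule for $\mathbf{Z}$ if $m=\infty$.
   Context: $X$ is a nonnegative integrable random variable, $X_1,X_2,\dots$ i.i.d. copies, and $X_0:=0$. $H$ is a random variable with values in $\{0,1,2,\dots\}$, $\mathbb{P}(H<\infty)=1$, independent of the $X_i$; $S(i):=\mathbb{P}(H\ge i)$. Reward sequence $\mathbf{Y}$: $Y_0:=X_0$, $Y_i:=X_i\mathbb{1}_{\{H\ge i\}}$ for $i\in\mathbb{N}$, $Y_\infty:=\limsup_i Y_i=0$; filtration $\mathcal{F}_0$ trivial, $\mathcal{F}_i=\sigma(\mathbb{1}_{\{H=0\}},X_1,\dots,\mathbb{1}_{\{H=i-1\}},X_i)$, $\mathcal{F}_\infty=\sigma(\bigcup_i\mathcal{F}_i)$. $\mathcal{T}^*$ is the class of stopping times for $(\mathcal{F}_i)$ with values in $\{0,1,\dots\}\cup\{\infty\}$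 (possibly infinite with positive probability). Discounted problem $\mathbf{Z}$: $Z_0:=Y_0$, $Z_i:=S(i)X_i$ for $i\in\mathbb{N}$, $Z_\infty:=\limsup_iZ_i=0$; filtration $\mathcal{B}_0$ trivial, $\mathcal{B}_i=\sigma(X_1,\dots,X_i)$, $\mathcal{B}_\infty=\sigma(\bigcup_i\mathcal{B}_i)$; $\mathcal{T}$ is the class of possibly infinite stopping times for $(\mathcal{B}_i)$, and $\mathcal{T}_i\subseteq\mathcal{T}$ those with $\zeta\ge i$. Values: $\mathcal{V}(\mathbf{Y})=\sup_{\tau\in\mathcal{T}^*}\mathbb{E}Y_\tau$, $\mathcal{V}(\mathbf{Z})=\sup_{\zeta\in\mathcal{T}}\mathbb{E}Z_\zeta$. Backward induction rule for the finite sequence $Z_0,\dots,Z_m$: set $W_m=Z_m$, $W_i=\max(Z_i,\mathbb{E}[W_{i+1}\mid\mathcal{B}_i])$, and stop at the first $i\le m$ with $Z_i\ge\mathbb{E}[W_{i+1}\mid\mathcal{B}_i]$ (with stopping at $m$ otherwise). Snell envelope of $\mathbf{Z}$: $V_i=\operatorname{ess\,sup}_{\zeta\in\mathcal{T}_i}\mathbb{E}[Z_\zeta\mid\mathcal{B}_i]$; Snell rule: $\bar\zeta=\inf\{i\in\{0,1,\dots\}: Z_i\ge\mathbb{E}[V_{i+1}\mid\mathcal{B}_i]\}$. *)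

theory Defs
  imports "HOL-Probability.Probability" "HOL-Library.Extended_Nat"
begin

definition Surv :: "'a measure \<Rightarrow> ('a \<Rightarrow> nat) \<Rightarrow> nat \<Rightarrow> real" where
  "Surv M H i = measure M {\<omega> \<in> space M. H \<omega> \<ge> i}"

definition supp_sup :: "'a measure \<Rightarrow> ('a \<Rightarrow> nat) \<Rightarrow> enat" where
  "supp_sup M H = Sup (enat ` {n. measure M {\<omega> \<in> space M. H \<omega> = n} > 0})"

definition B_filt :: "'a measure \<Rightarrow> (nat \<Rightarrow> 'a \<Rightarrow> real) \<Rightarrow> enat \<Rightarrow> 'a measure" where
  "B_filt M X t = sigma (space M)
     {X j -` A \<inter> space M | j A. 1 \<le> j \<and> enat j \<le> t \<and> A \<in> sets borel}"

definition F_filt :: "'a measure \<Rightarrow> (nat \<Rightarrow> 'a \<Rightarrow> real) \<Rightarrow> ('a \<Rightarrow> nat) \<Rightarrow> enat \<Rightarrow> 'a measure" where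
  "F_filt M X H t = sigma (space M)
     ({X j -` A \<inter> space M | j A. 1 \<le> j \<and> enat j \<le> t \<and> A \<in> sets borel}
      \<union> {{\<omega> \<in> space M. H \<omega> = j - 1} | j. 1 \<le> j \<and> enat j \<le> t})"

definition Y_stop :: "(nat \<Rightarrow> 'a \<Rightarrow> real) \<Rightarrow> ('a \<Rightarrow> nat) \<Rightarrow> ('a \<Rightarrow> enat) \<Rightarrow> 'a \<Rightarrow> real" where
  "Y_stop X H \<tau> \<omega> = (case \<tau> \<omega> of enat i \<Rightarrow> (if i \<le> H \<omega> then X i \<omega> else 0) | \<infinity> \<Rightarrow> 0)"

definition Z_seq :: "'a measure \<Rightarrow> (nat \<Rightarrow> 'a \<Rightarrow> real) \<Rightarrow> ('a \<Rightarrow> nat) \<Rightarrow> nat \<Rightarrow> 'a \<Rightarrow> real" where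
  "Z_seq M X H i \<omega> = Surv M H i * X i \<omega>"

definition Z_stop :: "'a measure \<Rightarrow> (nat \<Rightarrow> 'a \<Rightarrow> real) \<Rightarrow> ('a \<Rightarrow> nat) \<Rightarrow> ('a \<Rightarrow> enat) \<Rightarrow> 'a \<Rightarrow> real" where
  "Z_stop M X H \<zeta> \<omega> = (case \<zeta> \<omega> of enat i \<Rightarrow> Z_seq M X H i \<omega> | \<infinity> \<Rightarrow> 0)"

definition T_star :: "'a measure \<Rightarrow> (nat \<Rightarrow> 'a \<Rightarrow> real) \<Rightarrow> ('a \<Rightarrow> nat) \<Rightarrow> ('a \<Rightarrow> enat) set" where
  "T_star M X H = {\<tau>. stopping_time (F_filt M X H) \<tau>}"

definition T_B :: "'a measure \<Rightarrow> (nat \<Rightarrow> 'a \<Rightarrow> real) \<Rightarrow> ('a \<Rightarrow> enat) set" where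
  "T_B M X = {\<zeta>. stopping_time (B_filt M X) \<zeta>}"

definition T_B_from :: "'a measure \<Rightarrow> (nat \<Rightarrow> 'a \<Rightarrow> real) \<Rightarrow> nat \<Rightarrow> ('a \<Rightarrow> enat) set" where
  "T_B_from M X i = {\<zeta> \<in> T_B M X. \<forall>\<omega>\<in>space M. \<zeta> \<omega> \<ge> enat i}"

definition V_Y :: "'a measure \<Rightarrow> (nat \<Rightarrow> 'a \<Rightarrow> real) \<Rightarrow> ('a \<Rightarrow> nat) \<Rightarrow> ennreal" where
  "V_Y M X H = (SUP \<tau> \<in> T_star M X H. \<integral>\<^sup>+ \<omega>. ennreal (Y_stop X H \<tau> \<omega>) \<partial>M)"

definition V_Z :: "'a measure \<Rightarrow> (nat \<Rightarrow> 'a \<Rightarrow> real) \<Rightarrow> ('a \<Rightarrow> nat) \<Rightarrow> ennreal" where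
  "V_Z M X H = (SUP \<zeta> \<in> T_B M X. \<integral>\<^sup>+ \<omega>. ennreal (Z_stop M X H \<zeta> \<omega>) \<partial>M)"

text \<open>Backward induction for Z_0,...,Z_m:  W_m = Z_m, W_i = max(Z_i, E[W_{i+1} | B_i]),
  computed via k = m - i.\<close>
fun BI_aux :: "'a measure \<Rightarrow> (nat \<Rightarrow> 'a \<Rightarrow> real) \<Rightarrow> ('a \<Rightarrow> nat) \<Rightarrow> nat \<Rightarrow> nat \<Rightarrow> 'a \<Rightarrow> ennreal" where
  "BI_aux M X H m 0 = (\<lambda>\<omega>. ennreal (Z_seq M X H m \<omega>))"
| "BI_aux M X H m (Suc k) = (\<lambda>\<omega>. max (ennreal (Z_seq M X H (m - Suc k) \<omega>))
      (nn_cond_exp M (B_filt M X (enat (m - Suc k))) (BI_aux M X H m k) \<omega>))"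

definition BI_W :: "'a measure \<Rightarrow> (nat \<Rightarrow> 'a \<Rightarrow> real) \<Rightarrow> ('a \<Rightarrow> nat) \<Rightarrow> nat \<Rightarrow> nat \<Rightarrow> 'a \<Rightarrow> ennreal" where
  "BI_W M X H m i = BI_aux M X H m (m - i)"

definition BI_rule :: "'a measure \<Rightarrow> (nat \<Rightarrow> 'a \<Rightarrow> real) \<Rightarrow> ('a \<Rightarrow> nat) \<Rightarrow> nat \<Rightarrow> 'a \<Rightarrow> enat" where
  "BI_rule M X H m \<omega> = enat (LEAST i. i = m \<or> (i < m \<and>
      ennreal (Z_seq M X H i \<omega>) \<ge> nn_cond_exp M (B_filt M X (enat i)) (BI_W M X H m (Suc i)) \<omega>))"

definition is_ess_sup :: "'a measure \<Rightarrow> ('a \<Rightarrow> ennreal) set \<Rightarrow> ('a \<Rightarrow> ennreal) \<Rightarrow> bool" where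
  "is_ess_sup M \<S> V \<longleftrightarrow> V \<in> borel_measurable M \<and> (\<forall>f\<in>\<S>. AE x in M. f x \<le> V x) \<and>
     (\<forall>g \<in> borel_measurable M. (\<forall>f\<in>\<S>. AE x in M. f x \<le> g x) \<longrightarrow> (AE x in M. V x \<le> g x))"

definition is_snell_envelope :: "'a measure \<Rightarrow> (nat \<Rightarrow> 'a \<Rightarrow> real) \<Rightarrow> ('a \<Rightarrow> nat) \<Rightarrow> (nat \<Rightarrow> 'a \<Rightarrow> ennreal) \<Rightarrow> bool" where
  "is_snell_envelope M X H V \<longleftrightarrow> (\<forall>i. is_ess_sup M
     ((\<lambda>\<zeta>. nn_cond_exp M (B_filt M X (enat i)) (\<lambda>\<omega>. ennreal (Z_stop M X H \<zeta> \<omega>))) ` T_B_from M X i)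
     (V i))"

definition snell_rule :: "'a measure \<Rightarrow> (nat \<Rightarrow> 'a \<Rightarrow> real) \<Rightarrow> ('a \<Rightarrow> nat) \<Rightarrow> (nat \<Rightarrow> 'a \<Rightarrow> ennreal) \<Rightarrow> 'a \<Rightarrow> enat" where
  "snell_rule M X H V \<omega> =
     (if \<exists>i. ennreal (Z_seq M X H i \<omega>) \<ge> nn_cond_exp M (B_filt M X (enat i)) (V (Suc i)) \<omega>
      then enat (LEAST i. ennreal (Z_seq M X H i \<omega>) \<ge> nn_cond_exp M (B_filt M X (enat i)) (V (Suc i)) \<omega>)
      else \<infinity>)"

end

theory Submission
  imports Defs
begin

locale OS =
  fixes M :: "'a measure" and X :: "nat \<Rightarrow> 'a \<Rightarrow> real" and H :: "'a \<Rightarrow> nat"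
  assumes ps: "prob_space M"
    and X_meas: "\<And>i. X i \<in> borel_measurable M"
    and X0: "\<And>\<omega>. \<omega> \<in> space M \<Longrightarrow> X 0 \<omega> = 0"
    and X_nonneg: "\<And>i \<omega>. \<omega> \<in> space M \<Longrightarrow> X i \<omega> \<ge> 0"
    and X_int: "integrable M (X 1)"
    and X_id: "\<And>i. i \<ge> 1 \<Longrightarrow> distr M borel (X i) = distr M borel (X 1)"
    and H_meas: "H \<in> measurable M (count_space UNIV)"
    and indep: "prob_space.indep_vars M (\<lambda>_. borel)
        (\<lambda>k. case k of None \<Rightarrow> (\<lambda>\<omega>. real (H \<omega>)) | Some j \<Rightarrow> X j) (insert None (Some ` {1..}))"
    and H_int: "integrable M (\<lambda>\<omega>. real (H \<omega>))"

sublocale OS \<subseteq> prob_space M by (rule ps)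

context OS
begin

abbreviation "Yv \<equiv> (\<lambda>k. case k of None \<Rightarrow> (\<lambda>\<omega>. real (H \<omega>)) | Some j \<Rightarrow> X j)"
abbreviation "I0 \<equiv> insert None (Some ` {1::nat..})"

definition gen :: "nat option \<Rightarrow> 'a set set" where
  "gen k = {Yv k -` A \<inter> space M | A. A \<in> sets borel}"

definition genB :: "enat \<Rightarrow> 'a set set" where
  "genB t = {X j -` A \<inter> space M | j A. 1 \<le> j \<and> enat j \<le> t \<and> A \<in> sets borel}"

lemma H_meas_borel[measurable]: "(\<lambda>\<omega>. real (H \<omega>)) \<in> borel_measurable M"
  by (rule measurable_compose[OF H_meas]) simp

lemma Yv_meas: "Yv k \<in> borel_measurable M"
  by (cases k) (auto simp: X_meas)

lemma gen_sets: "gen k \<subseteq> sets M"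
  using Yv_meas[of k] unfolding gen_def by (auto intro!: measurable_sets[of "Yv k" M borel])

lemma genB_sets: "genB t \<subseteq> sets M"
  unfolding genB_def using X_meas by (auto intro!: measurable_sets[of "X _" M borel])

lemma genB_Pow: "genB t \<subseteq> Pow (space M)"
  using genB_sets sets.sets_into_space by blast

lemma sets_B: "sets (B_filt M X t) = sigma_sets (space M) (genB t)"
  unfolding B_filt_def genB_def[symmetric] using genB_Pow by (simp add: sets_measure_of)

lemma space_B[simp]: "space (B_filt M X t) = space M"
  unfolding B_filt_def genB_def[symmetric] using genB_Pow by (simp add: space_measure_of)

lemma B_sub: "sets (B_filt M X t) \<subseteq> sets M"
  unfolding sets_B using genB_sets by (simp add: sigma_sets_le_sets_iff)

lemma subalg_B: "subalgebra M (B_filt M X t)"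
  using B_sub by (simp add: subalgebra_def)

lemma B_mono: "s \<le> t \<Longrightarrow> sets (B_filt M X s) \<subseteq> sets (B_filt M X t)"
  unfolding sets_B genB_def
  by (rule sigma_sets_mono') (blast intro: order_trans)

lemma fms_B: "finite_measure_subalgebra M (B_filt M X t)"
  unfolding finite_measure_subalgebra_def finite_measure_subalgebra_axioms_def
  using subalg_B finite_measure_axioms by auto

lemma sfs_B: "sigma_finite_subalgebra M (B_filt M X t)"
  using fms_B finite_measure_subalgebra_is_sigma_finite by blast

lemma X_meas_B: "1 \<le> i \<Longrightarrow> enat i \<le> t \<Longrightarrow> X i \<in> borel_measurable (B_filt M X t)"
proof (rule measurableI)
  fix A :: "real set" assume "1 \<le> i" "enat i \<le> t" "A \<in> sets borel"
  then have "X i -` A \<inter> space M \<in> genB t" unfolding genB_def by blast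
  then show "X i -` A \<inter> space (B_filt M X t) \<in> sets (B_filt M X t)"
    unfolding sets_B by auto
qed auto

lemma Z_meas_B: "enat i \<le> t \<Longrightarrow> Z_seq M X H i \<in> borel_measurable (B_filt M X t)"
proof (cases "i = 0")
  case True
  have "(\<lambda>\<omega>. 0::real) \<in> borel_measurable (B_filt M X t)" by simp
  then show ?thesis
    by (rule measurable_cong[THEN iffD1, rotated]) (simp add: True Z_seq_def X0)
next
  case False
  assume "enat i \<le> t"
  then show ?thesis using X_meas_B[of i t] False unfolding Z_seq_def by simp
qed

lemma Z_meas[measurable]: "Z_seq M X H i \<in> borel_measurable M"
  unfolding Z_seq_def using X_meas by simp

end

context OS
begin

lemma gen_Int_stable: "Int_stable (gen k)"
proof (rule Int_stableI)
  fix a b assume "a \<in> gen k" "b \<in> gen k"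
  then obtain A B where "a = Yv k -` A \<inter> space M" "A \<in> sets borel" "b = Yv k -` B \<inter> space M" "B \<in> sets borel"
    unfolding gen_def by auto
  then show "a \<inter> b \<in> gen k" unfolding gen_def
    by (auto intro!: exI[of _ "A \<inter> B"])
qed

lemma indep_gen: "indep_sets gen I0"
  using indep unfolding indep_vars_def2 gen_def by simp

lemma gen_Pow: "(\<Union>k\<in>J. gen k) \<subseteq> Pow (space M)"
  using gen_sets sets.sets_into_space by blast

lemma IND:
  fixes f g :: "'a \<Rightarrow> ennreal"
  assumes J: "J1 \<subseteq> I0" "J2 \<subseteq> I0" "J1 \<inter> J2 = {}"
    and f: "f \<in> borel_measurable (sigma (space M) (\<Union>k\<in>J1. gen k))"
    and g: "g \<in> borel_measurable (sigma (space M) (\<Union>k\<in>J2. gen k))"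
  shows "(\<integral>\<^sup>+\<omega>. f \<omega> * g \<omega> \<partial>M) = (\<integral>\<^sup>+\<omega>. f \<omega> \<partial>M) * (\<integral>\<^sup>+\<omega>. g \<omega> \<partial>M)"
proof -
  define I where "I = (\<lambda>b::bool. if b then J1 else J2)"
  have ind1: "indep_sets (\<lambda>b. sigma_sets (space M) (\<Union>k\<in>I b. gen k)) UNIV"
  proof (rule indep_sets_collect_sigma)
    show "indep_sets gen (\<Union>b\<in>UNIV. I b)"
      by (rule indep_sets_mono_index[OF _ indep_gen]) (use J in \<open>auto simp: I_def\<close>)
    show "Int_stable (gen k)" for k by (rule gen_Int_stable)
    show "disjoint_family_on I UNIV"
      using J unfolding disjoint_family_on_def I_def by auto
  qed
  define G where "G b = sigma (space M) (\<Union>k\<in>I b. gen k)" for b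
  have sG: "sets (G b) = sigma_sets (space M) (\<Union>k\<in>I b. gen k)" for b
    unfolding G_def using gen_Pow by (simp add: sets_measure_of)
  have spG: "space (G b) = space M" for b
    unfolding G_def using gen_Pow by (simp add: space_measure_of)
  have subG: "sets (G b) \<subseteq> sets M" for b
    unfolding sG using gen_sets by (auto simp: sigma_sets_le_sets_iff)
  have idm: "(\<lambda>x. x) \<in> measurable M (G b)" for b
    by (rule measurableI) (use subG spG sets.Int_space_eq2 in auto)
  have "indep_var (G True) (\<lambda>x. x) (G False) (\<lambda>x. x)"
    unfolding indep_var_def indep_vars_def2
  proof
    show "\<forall>b\<in>UNIV. random_variable (case_bool (G True) (G False) b) (case_bool (\<lambda>x. x) (\<lambda>x. x) b)"
      using idm by (auto split: bool.split)
    show "indep_sets (\<lambda>b. {case_bool (\<lambda>x. x) (\<lambda>x. x) b -` A \<inter> space M |A. A \<in> sets (case_bool (G True) (G False) b)}) UNIV"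
    proof (rule indep_sets_mono_sets[OF ind1])
      fix b :: bool
      show "{case_bool (\<lambda>x. x) (\<lambda>x. x) b -` A \<inter> space M |A. A \<in> sets (case_bool (G True) (G False) b)}
         \<subseteq> sigma_sets (space M) (\<Union>k\<in>I b. gen k)"
      proof (cases b)
        case True
        then show ?thesis using sigma_sets_into_sp[OF gen_Pow[of "I True"]] sG[of True]
          by (auto simp: Int_absorb2)
      next
        case False
        then show ?thesis using sigma_sets_into_sp[OF gen_Pow[of "I False"]] sG[of False]
          by (auto simp: Int_absorb2)
      qed
    qed
  qed
  moreover have "f \<in> measurable (G True) borel" using f by (simp add: G_def I_def)
  moreover have "g \<in> measurable (G False) borel" using g by (simp add: G_def I_def)
  ultimately have "indep_var borel (f \<circ> (\<lambda>x. x)) borel (g \<circ> (\<lambda>x. x))"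
    by (rule indep_var_compose)
  then have iv: "indep_vars (\<lambda>_. borel) (case_bool f g) UNIV"
    unfolding indep_var_def by (simp add: comp_def case_bool_if if_distrib cong: if_cong)
  have "(\<integral>\<^sup>+\<omega>. (\<Prod>b\<in>UNIV. case_bool f g b \<omega>) \<partial>M) = (\<Prod>b\<in>UNIV. \<integral>\<^sup>+\<omega>. case_bool f g b \<omega> \<partial>M)"
    by (rule indep_vars_nn_integral[OF _ iv]) auto
  then show ?thesis by (simp add: UNIV_bool mult.commute)
qed

end

context OS
begin

lemma genB_eq: "(\<Union>k\<in>Some ` {1..j}. gen k) = genB (enat j)"
proof (intro equalityI subsetI)
  fix a assume "a \<in> (\<Union>k\<in>Some ` {1..j}. gen k)"
  then obtain i A where "1 \<le> i" "i \<le> j" "A \<in> sets borel" "a = X i -` A \<inter> space M"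
    unfolding gen_def by auto
  then show "a \<in> genB (enat j)" unfolding genB_def by auto
next
  fix a assume "a \<in> genB (enat j)"
  then obtain i A where "1 \<le> i" "i \<le> j" "A \<in> sets borel" "a = X i -` A \<inter> space M"
    unfolding genB_def by auto
  then show "a \<in> (\<Union>k\<in>Some ` {1..j}. gen k)"
    unfolding gen_def by (intro UN_I[of "Some i"]) auto
qed

lemma B_filt_eq: "B_filt M X t = sigma (space M) (genB t)"
  unfolding B_filt_def genB_def ..

lemma sigma_gen_B: "sigma (space M) (\<Union>k\<in>Some ` {1..j}. gen k) = B_filt M X (enat j)"
  unfolding genB_eq B_filt_eq ..

lemma X_meas_gen: "X i \<in> borel_measurable (sigma (space M) (gen (Some i)))"
proof (rule measurableI)
  fix A :: "real set" assume "A \<in> sets borel"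
  then have "X i -` A \<inter> space M \<in> gen (Some i)" unfolding gen_def by auto
  then show "X i -` A \<inter> space (sigma (space M) (gen (Some i))) \<in> sets (sigma (space M) (gen (Some i)))"
    using gen_Pow[of "{Some i}"] by (simp add: sets_measure_of space_measure_of)
qed (use gen_Pow[of "{Some i}"] in \<open>simp add: space_measure_of\<close>)

lemma IND_BX:
  fixes h :: "real \<Rightarrow> ennreal"
  assumes A: "A \<in> sets (B_filt M X (enat j))" and h: "h \<in> borel_measurable borel"
  shows "(\<integral>\<^sup>+\<omega>. h (X (Suc j) \<omega>) * indicator A \<omega> \<partial>M) = (\<integral>\<^sup>+\<omega>. h (X (Suc j) \<omega>) \<partial>M) * emeasure M A"
proof -
  have "(\<integral>\<^sup>+\<omega>. h (X (Suc j) \<omega>) * indicator A \<omega> \<partial>M) = (\<integral>\<^sup>+\<omega>. h (X (Suc j) \<omega>) \<partial>M) * (\<integral>\<^sup>+\<omega>. indicator A \<omega> \<partial>M)"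
  proof (rule IND[of "{Some (Suc j)}" "Some ` {1..j}"])
    show "(\<lambda>\<omega>. h (X (Suc j) \<omega>)) \<in> borel_measurable (sigma (space M) (\<Union>k\<in>{Some (Suc j)}. gen k))"
      using measurable_compose[OF X_meas_gen h] by simp
    show "indicator A \<in> borel_measurable (sigma (space M) (\<Union>k\<in>Some ` {1..j}. gen k))"
      unfolding sigma_gen_B using A by simp
  qed auto
  also have "(\<integral>\<^sup>+\<omega>. indicator A \<omega> \<partial>M) = emeasure M A"
  proof -
    have "A \<in> sets M" using A B_sub by blast
    then show ?thesis by simp
  qed
  finally show ?thesis .
qed

lemma Hset_gen: "{\<omega>\<in>space M. i \<le> H \<omega>} \<in> gen None"
proof -
  have "{\<omega>\<in>space M. i \<le> H \<omega>} = (\<lambda>\<omega>. real (H \<omega>)) -` {real i..} \<inter> space M" by auto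
  moreover have "(\<lambda>\<omega>. real (H \<omega>)) -` {real i..} \<inter> space M \<in> gen None"
    unfolding gen_def by (rule CollectI, rule exI[of _ "{real i..}"]) simp
  ultimately show ?thesis by simp
qed

lemma Hset_sets[measurable]: "{\<omega>\<in>space M. i \<le> H \<omega>} \<in> sets M"
  using Hset_gen gen_sets by blast

lemma emeasure_Hset: "emeasure M {\<omega>\<in>space M. i \<le> H \<omega>} = ennreal (Surv M H i)"
  unfolding Surv_def by (simp add: emeasure_eq_measure)

lemma IND_BH:
  fixes f :: "'a \<Rightarrow> ennreal"
  assumes f: "f \<in> borel_measurable (B_filt M X (enat i))"
  shows "(\<integral>\<^sup>+\<omega>. f \<omega> * indicator {\<omega>\<in>space M. i \<le> H \<omega>} \<omega> \<partial>M) = (\<integral>\<^sup>+\<omega>. f \<omega> \<partial>M) * ennreal (Surv M H i)"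
proof -
  have "(\<integral>\<^sup>+\<omega>. f \<omega> * indicator {\<omega>\<in>space M. i \<le> H \<omega>} \<omega> \<partial>M)
     = (\<integral>\<^sup>+\<omega>. f \<omega> \<partial>M) * (\<integral>\<^sup>+\<omega>. indicator {\<omega>\<in>space M. i \<le> H \<omega>} \<omega> \<partial>M)"
  proof (rule IND[of "Some ` {1..i}" "{None}"])
    show "f \<in> borel_measurable (sigma (space M) (\<Union>k\<in>Some ` {1..i}. gen k))"
      unfolding sigma_gen_B using f by simp
    have "{\<omega>\<in>space M. i \<le> H \<omega>} \<in> sets (sigma (space M) (\<Union>k\<in>{None}. gen k))"
      using Hset_gen gen_Pow[of "{None}"] by (simp add: sets_measure_of)
    then show "indicator {\<omega>\<in>space M. i \<le> H \<omega>} \<in> borel_measurable (sigma (space M) (\<Union>k\<in>{None}. gen k))"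
      by simp
  qed auto
  also have "(\<integral>\<^sup>+\<omega>. indicator {\<omega>\<in>space M. i \<le> H \<omega>} \<omega> \<partial>M) = ennreal (Surv M H i)"
    using emeasure_Hset by simp
  finally show ?thesis .
qed

end

context OS
begin

lemmas X_meas'[measurable] = X_meas

definition Zn :: "nat \<Rightarrow> 'a \<Rightarrow> ennreal" where
  "Zn i \<omega> = ennreal (Z_seq M X H i \<omega>)"

lemma Zn_meas[measurable]: "Zn i \<in> borel_measurable M"
  unfolding Zn_def by simp

lemma Zn_meas_B: "enat i \<le> t \<Longrightarrow> Zn i \<in> borel_measurable (B_filt M X t)"
  unfolding Zn_def using Z_meas_B by simp

lemma Surv_nonneg: "0 \<le> Surv M H i"
  unfolding Surv_def by simp

lemma Z_nonneg: "\<omega> \<in> space M \<Longrightarrow> 0 \<le> Z_seq M X H i \<omega>"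
  unfolding Z_seq_def using Surv_nonneg X_nonneg by simp

definition EXv :: ennreal where
  "EXv = (\<integral>\<^sup>+\<omega>. ennreal (X 1 \<omega>) \<partial>M)"

lemma EXv_fin: "EXv < \<top>"
  using integrableD(2)[OF X_int] unfolding EXv_def by (simp add: top.not_eq_extremum)

lemma int_X: "1 \<le> i \<Longrightarrow> (\<integral>\<^sup>+\<omega>. ennreal (X i \<omega>) \<partial>M) = EXv"
proof -
  assume i: "1 \<le> i"
  have "(\<integral>\<^sup>+\<omega>. ennreal (X i \<omega>) \<partial>M) = (\<integral>\<^sup>+x. ennreal x \<partial>distr M borel (X i))"
    by (subst nn_integral_distr) (auto simp: X_meas)
  also have "\<dots> = (\<integral>\<^sup>+x. ennreal x \<partial>distr M borel (X 1))" using X_id[OF i] by simp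
  also have "\<dots> = EXv" unfolding EXv_def
    by (subst nn_integral_distr) (auto simp: X_meas)
  finally show ?thesis .
qed

lemma int_Zn: "(\<integral>\<^sup>+\<omega>. Zn i \<omega> \<partial>M) = (if i = 0 then 0 else ennreal (Surv M H i) * EXv)"
proof (cases "i = 0")
  case True
  then show ?thesis unfolding Zn_def Z_seq_def
    by (simp add: X0 cong: nn_integral_cong)
next
  case False
  have "(\<integral>\<^sup>+\<omega>. Zn i \<omega> \<partial>M) = (\<integral>\<^sup>+\<omega>. ennreal (Surv M H i) * ennreal (X i \<omega>) \<partial>M)"
    unfolding Zn_def Z_seq_def
    by (rule nn_integral_cong) (simp add: ennreal_mult Surv_nonneg X_nonneg)
  also have "\<dots> = ennreal (Surv M H i) * EXv"
    using False int_X[of i] by (subst nn_integral_cmult) (auto simp: X_meas)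
  finally show ?thesis using False by simp
qed

lemma int_Zn_le: "(\<integral>\<^sup>+\<omega>. Zn i \<omega> \<partial>M) \<le> ennreal (Surv M H i) * EXv"
  using int_Zn[of i] by (simp split: if_splits)

lemma Surv_summable: "summable (Surv M H)"
proof (rule summable_suminf_not_top)
  show "0 \<le> Surv M H i" for i by (rule Surv_nonneg)
  have pt: "ennreal (real (H \<omega>) + 1) = (\<Sum>i. indicator {\<omega>\<in>space M. i \<le> H \<omega>} \<omega>)" if "\<omega> \<in> space M" for \<omega>
  proof -
    have "(\<Sum>i. indicator {\<omega>\<in>space M. i \<le> H \<omega>} \<omega> :: ennreal) = (\<Sum>i\<in>{..H \<omega>}. indicator {\<omega>\<in>space M. i \<le> H \<omega>} \<omega>)"
      by (rule suminf_finite) (auto simp: indicator_def)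
    also have "\<dots> = (\<Sum>i\<in>{..H \<omega>}. 1)" using that by (intro sum.cong) (auto simp: indicator_def)
    also have "\<dots> = ennreal (real (H \<omega>) + 1)" by (simp add: ennreal_of_nat_eq_real_of_nat)
    finally show ?thesis by simp
  qed
  have "(\<Sum>i. ennreal (Surv M H i)) = (\<Sum>i. \<integral>\<^sup>+\<omega>. indicator {\<omega>\<in>space M. i \<le> H \<omega>} \<omega> \<partial>M)"
    by (simp add: emeasure_Hset)
  also have "\<dots> = (\<integral>\<^sup>+\<omega>. (\<Sum>i. indicator {\<omega>\<in>space M. i \<le> H \<omega>} \<omega>) \<partial>M)"
    by (rule nn_integral_suminf[symmetric]) simp
  also have "\<dots> = (\<integral>\<^sup>+\<omega>. ennreal (real (H \<omega>) + 1) \<partial>M)"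
    by (rule nn_integral_cong) (rule pt[symmetric])
  also have "\<dots> \<noteq> \<top>"
  proof -
    have "integrable M (\<lambda>\<omega>. real (H \<omega>) + 1)" using H_int by simp
    from integrableD(2)[OF this] show ?thesis by simp
  qed
  finally show "(\<Sum>i. ennreal (Surv M H i)) \<noteq> \<top>" .
qed

end

context OS
begin

fun gseq :: "nat \<Rightarrow> nat \<Rightarrow> ennreal" where
  "gseq 0 k = 0"
| "gseq (Suc d) k = (\<integral>\<^sup>+\<omega>. max (Zn k \<omega>) (gseq d (Suc k)) \<partial>M)"

lemma gseq_mono: "gseq d k \<le> gseq (Suc d) k"
proof (induction d arbitrary: k)
  case 0
  then show ?case by simp
next
  case (Suc d)
  have e1: "gseq (Suc d) k = (\<integral>\<^sup>+\<omega>. max (Zn k \<omega>) (gseq d (Suc k)) \<partial>M)"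
    by (rule gseq.simps(2))
  have e2: "gseq (Suc (Suc d)) k = (\<integral>\<^sup>+\<omega>. max (Zn k \<omega>) (gseq (Suc d) (Suc k)) \<partial>M)"
    by (rule gseq.simps(2))
  show ?case unfolding e1 e2
    by (rule nn_integral_mono, rule max.mono[OF order_refl Suc.IH])
qed

lemma gseq_incseq: "incseq (\<lambda>d. gseq d k)"
  by (rule incseq_SucI) (rule gseq_mono)

definition Tl :: "nat \<Rightarrow> ennreal" where
  "Tl k = ennreal (\<Sum>i. Surv M H (i + k)) * EXv"

lemma Surv_tail_summable: "summable (\<lambda>i. Surv M H (i + k))"
  using summable_ignore_initial_segment[OF Surv_summable] by simp

lemma Tl_step: "Tl k = ennreal (Surv M H k) * EXv + Tl (Suc k)"
proof -
  have "(\<Sum>i. Surv M H (Suc i + k)) = (\<Sum>i. Surv M H (i + k)) - Surv M H (0 + k)"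
    by (rule suminf_split_head[OF Surv_tail_summable])
  then have eq: "(\<Sum>i. Surv M H (i + k)) = Surv M H k + (\<Sum>i. Surv M H (i + Suc k))"
    by simp
  have nn: "0 \<le> (\<Sum>i. Surv M H (i + Suc k))"
    by (rule suminf_nonneg[OF Surv_tail_summable]) (simp add: Surv_nonneg)
  show ?thesis unfolding Tl_def eq
    using nn Surv_nonneg by (simp add: ennreal_plus distrib_right)
qed

lemma Tl_lim: "Tl \<longlonglongrightarrow> 0"
proof -
  have "(\<lambda>k. (\<Sum>i. Surv M H (i + k))) = (\<lambda>k. (\<Sum>i. Surv M H i) - (\<Sum>i<k. Surv M H i))"
    using suminf_minus_initial_segment[OF Surv_summable] by simp
  moreover have "(\<lambda>k. (\<Sum>i. Surv M H i) - (\<Sum>i<k. Surv M H i)) \<longlonglongrightarrow> (\<Sum>i. Surv M H i) - (\<Sum>i. Surv M H i)"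
    by (intro tendsto_diff tendsto_const summable_LIMSEQ Surv_summable)
  ultimately have "(\<lambda>k. (\<Sum>i. Surv M H (i + k))) \<longlonglongrightarrow> 0" by simp
  then have "(\<lambda>k. ennreal (\<Sum>i. Surv M H (i + k))) \<longlonglongrightarrow> ennreal 0" by (rule tendsto_ennrealI)
  then have "(\<lambda>k. EXv * ennreal (\<Sum>i. Surv M H (i + k))) \<longlonglongrightarrow> EXv * ennreal 0"
    by (rule ennreal_tendsto_cmult[OF EXv_fin])
  then show ?thesis unfolding Tl_def by (simp add: mult.commute)
qed

lemma gseq_le_Tl: "gseq d k \<le> Tl k"
proof (induction d arbitrary: k)
  case 0
  then show ?case by simp
next
  case (Suc d)
  have "gseq (Suc d) k \<le> (\<integral>\<^sup>+\<omega>. Zn k \<omega> + gseq d (Suc k) \<partial>M)"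
    by (simp only: gseq.simps) (intro nn_integral_mono, simp)
  also have "\<dots> = (\<integral>\<^sup>+\<omega>. Zn k \<omega> \<partial>M) + gseq d (Suc k)"
    by (subst nn_integral_add) (auto simp: emeasure_space_1)
  also have "\<dots> \<le> ennreal (Surv M H k) * EXv + Tl (Suc k)"
    by (intro add_mono int_Zn_le Suc)
  also have "\<dots> = Tl k" by (rule Tl_step[symmetric])
  finally show ?case .
qed

definition c :: "nat \<Rightarrow> ennreal" where
  "c k = (SUP d. gseq d k)"

lemma c_le_Tl: "c k \<le> Tl k"
  unfolding c_def by (rule SUP_least) (rule gseq_le_Tl)

lemma c_lim: "c \<longlonglongrightarrow> 0"
  by (rule tendsto_sandwich[of "\<lambda>_. 0" _ _ Tl]) (auto simp: c_le_Tl Tl_lim)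

lemma c_eq: "c k = (\<integral>\<^sup>+\<omega>. max (Zn k \<omega>) (c (Suc k)) \<partial>M)"
proof -
  have "c k = (SUP d. gseq (Suc d) k)"
    unfolding c_def
  proof (rule antisym)
    show "(SUP d. gseq d k) \<le> (SUP d. gseq (Suc d) k)"
      by (rule SUP_mono) (use gseq_mono in blast)
    show "(SUP d. gseq (Suc d) k) \<le> (SUP d. gseq d k)"
      by (rule SUP_least) (rule SUP_upper, simp)
  qed
  also have "\<dots> = (SUP d. \<integral>\<^sup>+\<omega>. max (Zn k \<omega>) (gseq d (Suc k)) \<partial>M)" by simp
  also have "\<dots> = (\<integral>\<^sup>+\<omega>. (SUP d. max (Zn k \<omega>) (gseq d (Suc k))) \<partial>M)"
  proof (rule nn_integral_monotone_convergence_SUP[symmetric])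
    show "incseq (\<lambda>d \<omega>. max (Zn k \<omega>) (gseq d (Suc k)))"
      by (rule incseq_SucI) (rule le_funI, rule max.mono[OF order_refl gseq_mono])
  qed simp
  also have "\<dots> = (\<integral>\<^sup>+\<omega>. max (Zn k \<omega>) (c (Suc k)) \<partial>M)"
    unfolding c_def
    by (rule nn_integral_cong) (simp add: sup_max[symmetric] SUP_sup_const1)
  finally show ?thesis .
qed

definition U :: "nat \<Rightarrow> 'a \<Rightarrow> ennreal" where
  "U k \<omega> = max (Zn k \<omega>) (c (Suc k))"

lemma U_meas[measurable]: "U k \<in> borel_measurable M"
  unfolding U_def by simp

lemma U_meas_B: "enat k \<le> t \<Longrightarrow> U k \<in> borel_measurable (B_filt M X t)"
  unfolding U_def using Zn_meas_B by simp

lemma c_U: "c k = (\<integral>\<^sup>+\<omega>. U k \<omega> \<partial>M)"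
  unfolding U_def by (rule c_eq)

end

context OS
begin

definition Seq :: "('a \<Rightarrow> enat) \<Rightarrow> nat \<Rightarrow> 'a set" where
  "Seq \<zeta> i = {\<omega>\<in>space M. \<zeta> \<omega> = enat i}"

definition Gt :: "('a \<Rightarrow> enat) \<Rightarrow> nat \<Rightarrow> 'a set" where
  "Gt \<zeta> j = {\<omega>\<in>space M. enat j < \<zeta> \<omega>}"

definition Zs :: "('a \<Rightarrow> enat) \<Rightarrow> 'a \<Rightarrow> ennreal" where
  "Zs \<zeta> \<omega> = ennreal (Z_stop M X H \<zeta> \<omega>)"

lemma stB_le: "\<zeta> \<in> T_B M X \<Longrightarrow> {\<omega>\<in>space M. \<zeta> \<omega> \<le> enat t} \<in> sets (B_filt M X (enat t))"
  using stopping_timeD[of "B_filt M X" \<zeta> "enat t"] unfolding T_B_def pred_def by simp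

lemma stB_eq: "\<zeta> \<in> T_B M X \<Longrightarrow> Seq \<zeta> t \<in> sets (B_filt M X (enat t))"
proof (cases t)
  case 0
  assume z: "\<zeta> \<in> T_B M X"
  have "Seq \<zeta> t = {\<omega>\<in>space M. \<zeta> \<omega> \<le> enat 0}"
    unfolding Seq_def 0 by (auto simp: zero_enat_def[symmetric])
  then show ?thesis using stB_le[OF z, of 0] 0 by simp
next
  case (Suc s)
  assume z: "\<zeta> \<in> T_B M X"
  have "Seq \<zeta> t = {\<omega>\<in>space M. \<zeta> \<omega> \<le> enat t} - {\<omega>\<in>space M. \<zeta> \<omega> \<le> enat s}"
  proof -
    have "\<zeta> \<omega> = enat (Suc s) \<longleftrightarrow> \<zeta> \<omega> \<le> enat (Suc s) \<and> \<not> \<zeta> \<omega> \<le> enat s" for \<omega>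
      by (cases "\<zeta> \<omega>") auto
    then show ?thesis unfolding Seq_def Suc by blast
  qed
  moreover have "{\<omega>\<in>space M. \<zeta> \<omega> \<le> enat s} \<in> sets (B_filt M X (enat t))"
    using stB_le[OF z, of s] B_mono[of "enat s" "enat t"] Suc by auto
  ultimately show ?thesis using stB_le[OF z, of t] by auto
qed

lemma stB_gt: "\<zeta> \<in> T_B M X \<Longrightarrow> Gt \<zeta> t \<in> sets (B_filt M X (enat t))"
proof -
  assume z: "\<zeta> \<in> T_B M X"
  have "Gt \<zeta> t = space M - {\<omega>\<in>space M. \<zeta> \<omega> \<le> enat t}"
    unfolding Gt_def by auto
  then show ?thesis using stB_le[OF z, of t]
    by (metis sets.compl_sets space_B)
qed

lemma Seq_sets[measurable]: "\<zeta> \<in> T_B M X \<Longrightarrow> Seq \<zeta> t \<in> sets M"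
  using stB_eq B_sub by blast

lemma Gt_sets[measurable]: "\<zeta> \<in> T_B M X \<Longrightarrow> Gt \<zeta> t \<in> sets M"
  using stB_gt B_sub by blast

lemma Zs_decomp:
  assumes "\<omega> \<in> space M"
  shows "Zs \<zeta> \<omega> * indicator S \<omega> = (\<Sum>i. Zn i \<omega> * indicator (S \<inter> Seq \<zeta> i) \<omega>)"
proof (cases "\<zeta> \<omega>")
  case (enat n)
  have "(\<lambda>i. Zn i \<omega> * indicator (S \<inter> Seq \<zeta> i) \<omega>) = (\<lambda>i. if i = n then Zn i \<omega> * indicator S \<omega> else 0)"
    using assms enat by (auto simp: Seq_def indicator_def)
  then have "(\<Sum>i. Zn i \<omega> * indicator (S \<inter> Seq \<zeta> i) \<omega>) = Zn n \<omega> * indicator S \<omega>"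
    using sums_unique[OF sums_single[of n "\<lambda>i. Zn i \<omega> * indicator S \<omega>"]] by simp
  then show ?thesis using enat by (simp add: Zs_def Z_stop_def Zn_def)
next
  case infinity
  have "(\<lambda>i. Zn i \<omega> * indicator (S \<inter> Seq \<zeta> i) \<omega>) = (\<lambda>i. 0)"
    using infinity by (auto simp: Seq_def indicator_def)
  then show ?thesis using infinity by (simp add: Zs_def Z_stop_def)
qed

lemma Zs_meas[measurable]:
  assumes z: "\<zeta> \<in> T_B M X"
  shows "Zs \<zeta> \<in> borel_measurable M"
proof -
  have "(\<lambda>\<omega>. \<Sum>i. Zn i \<omega> * indicator (space M \<inter> Seq \<zeta> i) \<omega>) \<in> borel_measurable M"
    using z by measurable
  moreover have "\<And>\<omega>. \<omega> \<in> space M \<Longrightarrow> (\<Sum>i. Zn i \<omega> * indicator (space M \<inter> Seq \<zeta> i) \<omega>) = Zs \<zeta> \<omega>"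
    using Zs_decomp[of _ \<zeta> "space M"] by simp
  ultimately show ?thesis by (rule measurable_cong[THEN iffD1, rotated]) simp
qed

lemma int_Zs_decomp:
  assumes z: "\<zeta> \<in> T_B M X" and S: "S \<in> sets M"
  shows "(\<integral>\<^sup>+\<omega>. Zs \<zeta> \<omega> * indicator S \<omega> \<partial>M) = (\<Sum>i. \<integral>\<^sup>+\<omega>. Zn i \<omega> * indicator (S \<inter> Seq \<zeta> i) \<omega> \<partial>M)"
proof -
  have "(\<integral>\<^sup>+\<omega>. Zs \<zeta> \<omega> * indicator S \<omega> \<partial>M) = (\<integral>\<^sup>+\<omega>. (\<Sum>i. Zn i \<omega> * indicator (S \<inter> Seq \<zeta> i) \<omega>) \<partial>M)"
    by (rule nn_integral_cong) (rule Zs_decomp)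
  also have "\<dots> = (\<Sum>i. \<integral>\<^sup>+\<omega>. Zn i \<omega> * indicator (S \<inter> Seq \<zeta> i) \<omega> \<partial>M)"
    by (rule nn_integral_suminf) (use z S in measurable)
  finally show ?thesis .
qed

lemma IND_U:
  assumes A: "A \<in> sets (B_filt M X (enat j))"
  shows "(\<integral>\<^sup>+\<omega>. U (Suc j) \<omega> * indicator A \<omega> \<partial>M) = c (Suc j) * emeasure M A"
proof -
  define h where "h x = max (ennreal (Surv M H (Suc j) * x)) (c (Suc (Suc j)))" for x
  have hm: "h \<in> borel_measurable borel" unfolding h_def by simp
  have U: "U (Suc j) \<omega> = h (X (Suc j) \<omega>)" for \<omega>
    unfolding U_def h_def Zn_def Z_seq_def by simp
  show ?thesis
    unfolding U using IND_BX[OF A hm] c_U[of "Suc j"] unfolding U by simp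
qed

lemma int_ind_union:
  fixes f :: "'a \<Rightarrow> ennreal"
  assumes [measurable]: "f \<in> borel_measurable M" "S1 \<in> sets M" "S2 \<in> sets M" and d: "S1 \<inter> S2 = {}"
  shows "(\<integral>\<^sup>+\<omega>. f \<omega> * indicator S1 \<omega> \<partial>M) + (\<integral>\<^sup>+\<omega>. f \<omega> * indicator S2 \<omega> \<partial>M)
       = (\<integral>\<^sup>+\<omega>. f \<omega> * indicator (S1 \<union> S2) \<omega> \<partial>M)"
proof -
  have "(\<integral>\<^sup>+\<omega>. f \<omega> * indicator S1 \<omega> \<partial>M) + (\<integral>\<^sup>+\<omega>. f \<omega> * indicator S2 \<omega> \<partial>M)
      = (\<integral>\<^sup>+\<omega>. f \<omega> * indicator S1 \<omega> + f \<omega> * indicator S2 \<omega> \<partial>M)"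
    by (rule nn_integral_add[symmetric]) auto
  also have "\<dots> = (\<integral>\<^sup>+\<omega>. f \<omega> * indicator (S1 \<union> S2) \<omega> \<partial>M)"
    using d by (intro nn_integral_cong) (auto simp: indicator_def)
  finally show ?thesis .
qed

end

context OS
begin

lemma B_sets_M: "A \<in> sets (B_filt M X t) \<Longrightarrow> A \<in> sets M"
  using B_sub by blast

lemma B_sets_space: "A \<in> sets (B_filt M X t) \<Longrightarrow> A \<subseteq> space M"
  using B_sets_M sets.sets_into_space by blast

lemma Zn_le_U: "Zn k \<omega> \<le> U k \<omega>"
  unfolding U_def by simp

lemma c_le_U: "c (Suc k) \<le> U k \<omega>"
  unfolding U_def by simp

lemma int_c_ind: "S \<in> sets M \<Longrightarrow> c k * emeasure M S = (\<integral>\<^sup>+\<omega>. c k * indicator S \<omega> \<partial>M)"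
  by (simp add: nn_integral_cmult_indicator)

lemma G1_trunc:
  assumes z: "\<zeta> \<in> T_B M X" and jn: "j \<le> n"
  shows "\<forall>A \<in> sets (B_filt M X (enat j)). (\<Sum>i<n. \<integral>\<^sup>+\<omega>. Zn i \<omega> * indicator (A \<inter> Gt \<zeta> j \<inter> Seq \<zeta> i) \<omega> \<partial>M)
           \<le> c (Suc j) * emeasure M (A \<inter> Gt \<zeta> j)"
  using jn
proof (induction j rule: inc_induct)
  case base
  show ?case
  proof
    fix A assume "A \<in> sets (B_filt M X (enat n))"
    have "A \<inter> Gt \<zeta> n \<inter> Seq \<zeta> i = {}" if "i < n" for i
      using that by (auto simp: Gt_def Seq_def)
    then show "(\<Sum>i<n. \<integral>\<^sup>+\<omega>. Zn i \<omega> * indicator (A \<inter> Gt \<zeta> n \<inter> Seq \<zeta> i) \<omega> \<partial>M)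
           \<le> c (Suc n) * emeasure M (A \<inter> Gt \<zeta> n)"
      by simp
  qed
next
  case (step j)
  show ?case
  proof
    fix A assume A: "A \<in> sets (B_filt M X (enat j))"
    have A1: "A \<in> sets (B_filt M X (enat (Suc j)))" using A B_mono[of "enat j" "enat (Suc j)"] by auto
    have AM[measurable]: "A \<in> sets M" using B_sets_M[OF A] .
    define F where "F i = (\<integral>\<^sup>+\<omega>. Zn i \<omega> * indicator (A \<inter> Gt \<zeta> j \<inter> Seq \<zeta> i) \<omega> \<partial>M)" for i
    define G where "G i = (\<integral>\<^sup>+\<omega>. Zn i \<omega> * indicator (A \<inter> Gt \<zeta> (Suc j) \<inter> Seq \<zeta> i) \<omega> \<partial>M)" for i
    have FG: "F i \<le> G i + (if i = Suc j then F (Suc j) else 0)" for i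
    proof (cases "i = Suc j")
      case True then show ?thesis by simp
    next
      case False
      then have "A \<inter> Gt \<zeta> j \<inter> Seq \<zeta> i = A \<inter> Gt \<zeta> (Suc j) \<inter> Seq \<zeta> i"
        by (auto simp: Gt_def Seq_def)
      then show ?thesis using False by (simp add: F_def G_def)
    qed
    have "(\<Sum>i<n. F i) \<le> (\<Sum>i<n. G i + (if i = Suc j then F (Suc j) else 0))"
      by (rule sum_mono) (rule FG)
    also have "\<dots> = (\<Sum>i<n. G i) + (\<Sum>i<n. (if i = Suc j then F (Suc j) else 0))"
      by (rule sum.distrib)
    also have "(\<Sum>i<n. (if i = Suc j then F (Suc j) else 0)) \<le> F (Suc j)"
      by (simp add: sum.delta)
    also have "(\<Sum>i<n. G i) \<le> c (Suc (Suc j)) * emeasure M (A \<inter> Gt \<zeta> (Suc j))"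
      using step.IH A1 unfolding G_def by blast
    also have "c (Suc (Suc j)) * emeasure M (A \<inter> Gt \<zeta> (Suc j))
        \<le> (\<integral>\<^sup>+\<omega>. U (Suc j) \<omega> * indicator (A \<inter> Gt \<zeta> (Suc j)) \<omega> \<partial>M)"
      using Gt_sets[OF z] AM by (subst int_c_ind) (auto intro!: nn_integral_mono mult_right_mono c_le_U)
    also have "F (Suc j) \<le> (\<integral>\<^sup>+\<omega>. U (Suc j) \<omega> * indicator (A \<inter> Gt \<zeta> j \<inter> Seq \<zeta> (Suc j)) \<omega> \<partial>M)"
      unfolding F_def by (intro nn_integral_mono mult_right_mono Zn_le_U) simp
    also have "(\<integral>\<^sup>+\<omega>. U (Suc j) \<omega> * indicator (A \<inter> Gt \<zeta> (Suc j)) \<omega> \<partial>M)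
        + (\<integral>\<^sup>+\<omega>. U (Suc j) \<omega> * indicator (A \<inter> Gt \<zeta> j \<inter> Seq \<zeta> (Suc j)) \<omega> \<partial>M)
        = (\<integral>\<^sup>+\<omega>. U (Suc j) \<omega> * indicator (A \<inter> Gt \<zeta> (Suc j) \<union> A \<inter> Gt \<zeta> j \<inter> Seq \<zeta> (Suc j)) \<omega> \<partial>M)"
    proof (rule int_ind_union)
      show "A \<inter> Gt \<zeta> (Suc j) \<in> sets M" "A \<inter> Gt \<zeta> j \<inter> Seq \<zeta> (Suc j) \<in> sets M"
        using Gt_sets[OF z] Seq_sets[OF z] AM by auto
      show "A \<inter> Gt \<zeta> (Suc j) \<inter> (A \<inter> Gt \<zeta> j \<inter> Seq \<zeta> (Suc j)) = {}"
        by (auto simp: Gt_def Seq_def)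
    qed simp
    also have "A \<inter> Gt \<zeta> (Suc j) \<union> A \<inter> Gt \<zeta> j \<inter> Seq \<zeta> (Suc j) = A \<inter> Gt \<zeta> j"
    proof -
      have "enat j < \<zeta> \<omega> \<longleftrightarrow> enat (Suc j) < \<zeta> \<omega> \<or> \<zeta> \<omega> = enat (Suc j)" for \<omega>
        by (cases "\<zeta> \<omega>") auto
      then show ?thesis unfolding Gt_def Seq_def by blast
    qed
    also have "(\<integral>\<^sup>+\<omega>. U (Suc j) \<omega> * indicator (A \<inter> Gt \<zeta> j) \<omega> \<partial>M) = c (Suc j) * emeasure M (A \<inter> Gt \<zeta> j)"
      by (rule IND_U) (use A stB_gt[OF z, of j] in auto)
    finally show "(\<Sum>i<n. \<integral>\<^sup>+\<omega>. Zn i \<omega> * indicator (A \<inter> Gt \<zeta> j \<inter> Seq \<zeta> i) \<omega> \<partial>M)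
           \<le> c (Suc j) * emeasure M (A \<inter> Gt \<zeta> j)"
      unfolding F_def by (simp add: add.commute)
  qed
qed

lemma G1:
  assumes z: "\<zeta> \<in> T_B M X" and A: "A \<in> sets (B_filt M X (enat j))"
  shows "(\<integral>\<^sup>+\<omega>. Zs \<zeta> \<omega> * indicator (A \<inter> Gt \<zeta> j) \<omega> \<partial>M) \<le> c (Suc j) * emeasure M (A \<inter> Gt \<zeta> j)"
proof -
  have AM[measurable]: "A \<in> sets M" using B_sets_M[OF A] .
  have "(\<integral>\<^sup>+\<omega>. Zs \<zeta> \<omega> * indicator (A \<inter> Gt \<zeta> j) \<omega> \<partial>M)
      = (\<Sum>i. \<integral>\<^sup>+\<omega>. Zn i \<omega> * indicator (A \<inter> Gt \<zeta> j \<inter> Seq \<zeta> i) \<omega> \<partial>M)"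
    by (rule int_Zs_decomp[OF z]) (use Gt_sets[OF z] AM in blast)
  also have "\<dots> = (SUP n. \<Sum>i<n. \<integral>\<^sup>+\<omega>. Zn i \<omega> * indicator (A \<inter> Gt \<zeta> j \<inter> Seq \<zeta> i) \<omega> \<partial>M)"
    by (rule suminf_eq_SUP)
  also have "\<dots> \<le> c (Suc j) * emeasure M (A \<inter> Gt \<zeta> j)"
  proof (rule SUP_least)
    fix n
    have "(\<Sum>i<n. \<integral>\<^sup>+\<omega>. Zn i \<omega> * indicator (A \<inter> Gt \<zeta> j \<inter> Seq \<zeta> i) \<omega> \<partial>M)
       \<le> (\<Sum>i<max n j. \<integral>\<^sup>+\<omega>. Zn i \<omega> * indicator (A \<inter> Gt \<zeta> j \<inter> Seq \<zeta> i) \<omega> \<partial>M)"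
      by (rule sum_mono2) auto
    also have "\<dots> \<le> c (Suc j) * emeasure M (A \<inter> Gt \<zeta> j)"
      using G1_trunc[OF z, of j "max n j"] A by auto
    finally show "(\<Sum>i<n. \<integral>\<^sup>+\<omega>. Zn i \<omega> * indicator (A \<inter> Gt \<zeta> j \<inter> Seq \<zeta> i) \<omega> \<partial>M)
       \<le> c (Suc j) * emeasure M (A \<inter> Gt \<zeta> j)" .
  qed
  finally show ?thesis .
qed

lemma alpha:
  assumes z: "\<zeta> \<in> T_B M X" and ge: "\<And>\<omega>. \<omega> \<in> space M \<Longrightarrow> enat j \<le> \<zeta> \<omega>"
    and A: "A \<in> sets (B_filt M X (enat j))"
  shows "(\<integral>\<^sup>+\<omega>. Zs \<zeta> \<omega> * indicator A \<omega> \<partial>M) \<le> (\<integral>\<^sup>+\<omega>. U j \<omega> * indicator A \<omega> \<partial>M)"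
proof -
  have AM[measurable]: "A \<in> sets M" using B_sets_M[OF A] .
  have Asp: "A \<subseteq> space M" using B_sets_space[OF A] .
  have Aeq: "A = (A \<inter> Seq \<zeta> j) \<union> (A \<inter> Gt \<zeta> j)"
  proof -
    have "j \<le> \<zeta> \<omega> \<Longrightarrow> \<zeta> \<omega> = enat j \<or> enat j < \<zeta> \<omega>" for \<omega>
      by (cases "\<zeta> \<omega>") auto
    then show ?thesis using Asp ge unfolding Seq_def Gt_def by blast
  qed
  have "(\<integral>\<^sup>+\<omega>. Zs \<zeta> \<omega> * indicator A \<omega> \<partial>M)
      = (\<integral>\<^sup>+\<omega>. Zs \<zeta> \<omega> * indicator (A \<inter> Seq \<zeta> j) \<omega> \<partial>M) + (\<integral>\<^sup>+\<omega>. Zs \<zeta> \<omega> * indicator (A \<inter> Gt \<zeta> j) \<omega> \<partial>M)"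
    by (subst Aeq, rule int_ind_union[symmetric]) (use Gt_sets[OF z] Seq_sets[OF z] Zs_meas[OF z] in \<open>auto simp: Seq_def Gt_def\<close>)
  also have "(\<integral>\<^sup>+\<omega>. Zs \<zeta> \<omega> * indicator (A \<inter> Seq \<zeta> j) \<omega> \<partial>M)
      = (\<integral>\<^sup>+\<omega>. Zn j \<omega> * indicator (A \<inter> Seq \<zeta> j) \<omega> \<partial>M)"
    by (rule nn_integral_cong) (auto simp: Seq_def Zs_def Z_stop_def Zn_def indicator_def)
  also have "\<dots> \<le> (\<integral>\<^sup>+\<omega>. U j \<omega> * indicator (A \<inter> Seq \<zeta> j) \<omega> \<partial>M)"
    by (intro nn_integral_mono mult_right_mono Zn_le_U) simp
  also have "(\<integral>\<^sup>+\<omega>. Zs \<zeta> \<omega> * indicator (A \<inter> Gt \<zeta> j) \<omega> \<partial>M) \<le> c (Suc j) * emeasure M (A \<inter> Gt \<zeta> j)"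
    by (rule G1[OF z A])
  also have "\<dots> \<le> (\<integral>\<^sup>+\<omega>. U j \<omega> * indicator (A \<inter> Gt \<zeta> j) \<omega> \<partial>M)"
    using Gt_sets[OF z] AM by (subst int_c_ind) (auto intro!: nn_integral_mono mult_right_mono c_le_U)
  also have "(\<integral>\<^sup>+\<omega>. U j \<omega> * indicator (A \<inter> Seq \<zeta> j) \<omega> \<partial>M) + (\<integral>\<^sup>+\<omega>. U j \<omega> * indicator (A \<inter> Gt \<zeta> j) \<omega> \<partial>M)
      = (\<integral>\<^sup>+\<omega>. U j \<omega> * indicator A \<omega> \<partial>M)"
    by (subst (3) Aeq, rule int_ind_union) (use Gt_sets[OF z] Seq_sets[OF z] Zs_meas[OF z] in \<open>auto simp: Seq_def Gt_def\<close>)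
  finally show ?thesis by simp
qed

end

context OS
begin

definition cond :: "nat \<Rightarrow> 'a \<Rightarrow> bool" where
  "cond i \<omega> \<longleftrightarrow> c (Suc i) \<le> Zn i \<omega>"

definition zs :: "nat \<Rightarrow> 'a \<Rightarrow> enat" where
  "zs k \<omega> = (if \<exists>i. k \<le> i \<and> cond i \<omega> then enat (LEAST i. k \<le> i \<and> cond i \<omega>) else \<infinity>)"

lemma zs_ge: "enat k \<le> zs k \<omega>"
proof (cases "\<exists>i. k \<le> i \<and> cond i \<omega>")
  case True
  then have "k \<le> (LEAST i. k \<le> i \<and> cond i \<omega>)" by (metis (mono_tags, lifting) LeastI)
  then show ?thesis using True by (simp add: zs_def)
next
  case False
  then show ?thesis by (auto simp: zs_def)
qed

lemma zs_step: "zs k \<omega> = (if cond k \<omega> then enat k else zs (Suc k) \<omega>)"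
proof (cases "cond k \<omega>")
  case True
  then have "(LEAST i. k \<le> i \<and> cond i \<omega>) = k" by (intro Least_equality) auto
  then show ?thesis using True by (auto simp: zs_def)
next
  case False
  then have eq: "(\<lambda>i. k \<le> i \<and> cond i \<omega>) = (\<lambda>i. Suc k \<le> i \<and> cond i \<omega>)"
    by (auto simp: le_Suc_eq fun_eq_iff) (metis le_antisym not_less_eq_eq)
  show ?thesis using False unfolding zs_def eq by simp
qed

lemma cond_sets: "i \<le> n \<Longrightarrow> {\<omega>\<in>space M. cond i \<omega>} \<in> sets (B_filt M X (enat n))"
proof -
  assume "i \<le> n"
  then have m[measurable]: "Zn i \<in> borel_measurable (B_filt M X (enat n))" by (intro Zn_meas_B) simp
  have "Measurable.pred (B_filt M X (enat n)) (\<lambda>\<omega>. c (Suc i) \<le> Zn i \<omega>)" by measurable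
  then show ?thesis unfolding pred_def cond_def by simp
qed

lemma zs_T_B: "zs k \<in> T_B M X"
  unfolding T_B_def
proof (intro CollectI stopping_timeI)
  fix t :: enat
  show "Measurable.pred (B_filt M X t) (\<lambda>\<omega>. zs k \<omega> \<le> t)"
  proof (cases t)
    case infinity
    then show ?thesis by simp
  next
    case (enat n)
    have eq: "zs k \<omega> \<le> enat n \<longleftrightarrow> (\<exists>i\<in>{k..n}. cond i \<omega>)" for \<omega>
    proof (cases "\<exists>i. k \<le> i \<and> cond i \<omega>")
      case True
      let ?l = "LEAST i. k \<le> i \<and> cond i \<omega>"
      have l: "k \<le> ?l \<and> cond ?l \<omega>" using True by (metis (mono_tags, lifting) LeastI)
      have "(\<exists>i\<in>{k..n}. cond i \<omega>) \<longleftrightarrow> ?l \<le> n"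
      proof
        assume "\<exists>i\<in>{k..n}. cond i \<omega>"
        then obtain i where "k \<le> i" "i \<le> n" "cond i \<omega>" by auto
        then have "?l \<le> i" by (intro Least_le) auto
        then show "?l \<le> n" using \<open>i \<le> n\<close> by simp
      next
        assume "?l \<le> n" then show "\<exists>i\<in>{k..n}. cond i \<omega>" using l by auto
      qed
      then show ?thesis using True by (simp add: zs_def)
    next
      case False
      then show ?thesis by (auto simp: zs_def)
    qed
    have "{\<omega>\<in>space M. \<exists>i\<in>{k..n}. cond i \<omega>} = (\<Union>i\<in>{k..n}. {\<omega>\<in>space M. cond i \<omega>})" by auto
    also have "\<dots> \<in> sets (B_filt M X (enat n))"
      by (intro sets.finite_UN) (auto intro: cond_sets)
    finally show ?thesis unfolding pred_def enat eq by simp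
  qed
qed

lemma zs_meas[measurable]: "Zs (zs k) \<in> borel_measurable M"
  by (rule Zs_meas[OF zs_T_B])

lemma G2_trunc:
  assumes jn: "j \<le> n"
  shows "\<forall>A \<in> sets (B_filt M X (enat j)).
     (\<Sum>i<Suc n. \<integral>\<^sup>+\<omega>. Zn i \<omega> * indicator (A \<inter> Seq (zs (Suc j)) i) \<omega> \<partial>M)
     + c (Suc n) * emeasure M (A \<inter> Gt (zs (Suc j)) n) = c (Suc j) * emeasure M A"
  using jn
proof (induction j rule: inc_induct)
  case base
  show ?case
  proof
    fix A assume A: "A \<in> sets (B_filt M X (enat n))"
    have "A \<inter> Seq (zs (Suc n)) i = {}" if "i < Suc n" for i
    proof -
      { fix x assume "x \<in> Seq (zs (Suc n)) i"
        then have "enat (Suc n) \<le> enat i" using zs_ge[of "Suc n" x] by (simp add: Seq_def)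
        then have False using that by simp }
      then show ?thesis by blast
    qed
    moreover have "A \<inter> Gt (zs (Suc n)) n = A"
      using B_sets_space[OF A] zs_ge[of "Suc n"] unfolding Gt_def
      by (auto simp: Suc_ile_eq)
    ultimately show "(\<Sum>i<Suc n. \<integral>\<^sup>+\<omega>. Zn i \<omega> * indicator (A \<inter> Seq (zs (Suc n)) i) \<omega> \<partial>M)
     + c (Suc n) * emeasure M (A \<inter> Gt (zs (Suc n)) n) = c (Suc n) * emeasure M A" by simp
  qed
next
  case (step j)
  show ?case
  proof
    fix A assume A: "A \<in> sets (B_filt M X (enat j))"
    have A1: "A \<in> sets (B_filt M X (enat (Suc j)))" using A B_mono[of "enat j" "enat (Suc j)"] by auto
    have AM[measurable]: "A \<in> sets M" using B_sets_M[OF A] .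
    define E where "E = {\<omega>\<in>space M. cond (Suc j) \<omega>}"
    have E1: "E \<in> sets (B_filt M X (enat (Suc j)))" unfolding E_def by (rule cond_sets) simp
    have EM[measurable]: "E \<in> sets M" using B_sets_M[OF E1] .
    have AE1: "A - E \<in> sets (B_filt M X (enat (Suc j)))" using A1 E1 by auto
    note [measurable] = Seq_sets[OF zs_T_B] Gt_sets[OF zs_T_B]
    define b where "b i = (\<integral>\<^sup>+\<omega>. Zn i \<omega> * indicator ((A - E) \<inter> Seq (zs (Suc (Suc j))) i) \<omega> \<partial>M)" for i
    define a0 where "a0 = (\<integral>\<^sup>+\<omega>. Zn (Suc j) \<omega> * indicator (A \<inter> E) \<omega> \<partial>M)"
    have ai: "(\<integral>\<^sup>+\<omega>. Zn i \<omega> * indicator (A \<inter> Seq (zs (Suc j)) i) \<omega> \<partial>M) = (if i = Suc j then a0 else 0) + b i" for i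
    proof -
      have "(\<integral>\<^sup>+\<omega>. Zn i \<omega> * indicator (A \<inter> Seq (zs (Suc j)) i) \<omega> \<partial>M)
        = (\<integral>\<^sup>+\<omega>. (if i = Suc j then Zn (Suc j) \<omega> * indicator (A \<inter> E) \<omega> else 0)
             + Zn i \<omega> * indicator ((A - E) \<inter> Seq (zs (Suc (Suc j))) i) \<omega> \<partial>M)"
      proof (rule nn_integral_cong)
        fix \<omega> assume \<omega>: "\<omega> \<in> space M"
        show "Zn i \<omega> * indicator (A \<inter> Seq (zs (Suc j)) i) \<omega> =
          (if i = Suc j then Zn (Suc j) \<omega> * indicator (A \<inter> E) \<omega> else 0)
             + Zn i \<omega> * indicator ((A - E) \<inter> Seq (zs (Suc (Suc j))) i) \<omega>"
          using \<omega> zs_step[of "Suc j" \<omega>] zs_ge[of "Suc (Suc j)" \<omega>]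
          by (cases "cond (Suc j) \<omega>") (auto simp: indicator_def Seq_def E_def)
      qed
      also have "\<dots> = (if i = Suc j then a0 else 0) + b i"
        by (subst nn_integral_add) (auto simp: a0_def b_def)
      finally show ?thesis .
    qed
    have "(\<Sum>i<Suc n. \<integral>\<^sup>+\<omega>. Zn i \<omega> * indicator (A \<inter> Seq (zs (Suc j)) i) \<omega> \<partial>M)
        = (\<Sum>i<Suc n. (if i = Suc j then a0 else 0)) + (\<Sum>i<Suc n. b i)"
      unfolding ai by (rule sum.distrib)
    also have "(\<Sum>i<Suc n. (if i = Suc j then a0 else 0)) = a0"
      using step.hyps by (simp add: sum.delta)
    finally have S: "(\<Sum>i<Suc n. \<integral>\<^sup>+\<omega>. Zn i \<omega> * indicator (A \<inter> Seq (zs (Suc j)) i) \<omega> \<partial>M) = a0 + (\<Sum>i<Suc n. b i)" .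
    have T: "A \<inter> Gt (zs (Suc j)) n = (A - E) \<inter> Gt (zs (Suc (Suc j))) n"
    proof -
      have "\<omega> \<in> A \<inter> Gt (zs (Suc j)) n \<longleftrightarrow> \<omega> \<in> (A - E) \<inter> Gt (zs (Suc (Suc j))) n" for \<omega>
        using zs_step[of "Suc j" \<omega>] step.hyps by (cases "cond (Suc j) \<omega>") (auto simp: Gt_def E_def)
      then show ?thesis by blast
    qed
    have IH: "(\<Sum>i<Suc n. b i) + c (Suc n) * emeasure M ((A - E) \<inter> Gt (zs (Suc (Suc j))) n)
        = c (Suc (Suc j)) * emeasure M (A - E)"
      using step.IH AE1 unfolding b_def by blast
    have a0U: "a0 = (\<integral>\<^sup>+\<omega>. U (Suc j) \<omega> * indicator (A \<inter> E) \<omega> \<partial>M)"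
      unfolding a0_def by (rule nn_integral_cong) (auto simp: indicator_def E_def U_def cond_def max_def)
    have cU: "c (Suc (Suc j)) * emeasure M (A - E) = (\<integral>\<^sup>+\<omega>. U (Suc j) \<omega> * indicator (A - E) \<omega> \<partial>M)"
      by (subst int_c_ind) (auto intro!: nn_integral_cong simp: indicator_def E_def U_def cond_def max_def)
    have "(\<Sum>i<Suc n. \<integral>\<^sup>+\<omega>. Zn i \<omega> * indicator (A \<inter> Seq (zs (Suc j)) i) \<omega> \<partial>M)
        + c (Suc n) * emeasure M (A \<inter> Gt (zs (Suc j)) n)
        = a0 + c (Suc (Suc j)) * emeasure M (A - E)"
      unfolding S T IH[symmetric] by (simp add: add.assoc)
    also have "\<dots> = (\<integral>\<^sup>+\<omega>. U (Suc j) \<omega> * indicator (A \<inter> E \<union> (A - E)) \<omega> \<partial>M)"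
      unfolding a0U cU by (rule int_ind_union) auto
    also have "A \<inter> E \<union> (A - E) = A" by blast
    also have "(\<integral>\<^sup>+\<omega>. U (Suc j) \<omega> * indicator A \<omega> \<partial>M) = c (Suc j) * emeasure M A"
      by (rule IND_U[OF A])
    finally show "(\<Sum>i<Suc n. \<integral>\<^sup>+\<omega>. Zn i \<omega> * indicator (A \<inter> Seq (zs (Suc j)) i) \<omega> \<partial>M)
        + c (Suc n) * emeasure M (A \<inter> Gt (zs (Suc j)) n) = c (Suc j) * emeasure M A" .
  qed
qed

lemma G2:
  assumes A: "A \<in> sets (B_filt M X (enat j))"
  shows "(\<integral>\<^sup>+\<omega>. Zs (zs (Suc j)) \<omega> * indicator A \<omega> \<partial>M) = c (Suc j) * emeasure M A"
proof -
  have AM[measurable]: "A \<in> sets M" using B_sets_M[OF A] .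
  define a where "a i = (\<integral>\<^sup>+\<omega>. Zn i \<omega> * indicator (A \<inter> Seq (zs (Suc j)) i) \<omega> \<partial>M)" for i
  define t where "t n = c (Suc n) * emeasure M (A \<inter> Gt (zs (Suc j)) n)" for n
  have L: "(\<integral>\<^sup>+\<omega>. Zs (zs (Suc j)) \<omega> * indicator A \<omega> \<partial>M) = (\<Sum>i. a i)"
    unfolding a_def by (rule int_Zs_decomp[OF zs_T_B AM])
  have S: "(\<lambda>n. \<Sum>i<Suc n. a i) \<longlonglongrightarrow> (\<Sum>i. a i)"
    using LIMSEQ_Suc[OF summable_LIMSEQ[OF summableI[of a]]] by simp
  have t: "t \<longlonglongrightarrow> 0"
  proof (rule tendsto_sandwich[of "\<lambda>_. 0" _ _ "\<lambda>n. c (Suc n)"])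
    show "\<forall>\<^sub>F n in sequentially. t n \<le> c (Suc n)"
      unfolding t_def using mult_left_mono[OF emeasure_le_1, of "c (Suc _)"] by auto
    show "(\<lambda>n. c (Suc n)) \<longlonglongrightarrow> 0" using LIMSEQ_Suc[OF c_lim] .
  qed auto
  have lim: "(\<lambda>n. (\<Sum>i<Suc n. a i) + t n) \<longlonglongrightarrow> (\<Sum>i. a i)"
    using tendsto_add[OF S t] by simp
  have ev: "\<forall>\<^sub>F n in sequentially. c (Suc j) * emeasure M A = (\<Sum>i<Suc n. a i) + t n"
    using eventually_ge_at_top[of j]
  proof eventually_elim
    case (elim n)
    then show ?case using G2_trunc[of j n] A unfolding a_def t_def by simp
  qed
  have "((\<lambda>n. c (Suc j) * emeasure M A) \<longlonglongrightarrow> (\<Sum>i. a i)) \<longleftrightarrow> ((\<lambda>n. (\<Sum>i<Suc n. a i) + t n) \<longlonglongrightarrow> (\<Sum>i. a i))"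
    by (rule tendsto_cong[OF ev])
  with lim have "(\<lambda>n. c (Suc j) * emeasure M A) \<longlonglongrightarrow> (\<Sum>i. a i)" by simp
  then have "c (Suc j) * emeasure M A = (\<Sum>i. a i)"
    by (rule LIMSEQ_unique[OF tendsto_const])
  then show ?thesis using L by simp
qed

lemma beta:
  assumes A: "A \<in> sets (B_filt M X (enat j))"
  shows "(\<integral>\<^sup>+\<omega>. Zs (zs j) \<omega> * indicator A \<omega> \<partial>M) = (\<integral>\<^sup>+\<omega>. U j \<omega> * indicator A \<omega> \<partial>M)"
proof -
  have AM[measurable]: "A \<in> sets M" using B_sets_M[OF A] .
  define E where "E = {\<omega>\<in>space M. cond j \<omega>}"
  have E1: "E \<in> sets (B_filt M X (enat j))" unfolding E_def by (rule cond_sets) simp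
  have EM[measurable]: "E \<in> sets M" using B_sets_M[OF E1] .
  have AE: "A - E \<in> sets (B_filt M X (enat j))" using A E1 by auto
  have "(\<integral>\<^sup>+\<omega>. Zs (zs j) \<omega> * indicator A \<omega> \<partial>M)
     = (\<integral>\<^sup>+\<omega>. Zs (zs j) \<omega> * indicator (A \<inter> E) \<omega> \<partial>M) + (\<integral>\<^sup>+\<omega>. Zs (zs j) \<omega> * indicator (A - E) \<omega> \<partial>M)"
  proof -
    have Aeq: "A = (A \<inter> E) \<union> (A - E)" by blast
    show ?thesis by (subst (1) Aeq, rule int_ind_union[symmetric]) auto
  qed
  also have "(\<integral>\<^sup>+\<omega>. Zs (zs j) \<omega> * indicator (A \<inter> E) \<omega> \<partial>M) = (\<integral>\<^sup>+\<omega>. U j \<omega> * indicator (A \<inter> E) \<omega> \<partial>M)"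
  proof (rule nn_integral_cong)
    fix \<omega> assume "\<omega> \<in> space M"
    show "Zs (zs j) \<omega> * indicator (A \<inter> E) \<omega> = U j \<omega> * indicator (A \<inter> E) \<omega>"
      using zs_step[of j \<omega>] by (auto simp: indicator_def E_def U_def cond_def Zs_def Z_stop_def Zn_def max_def)
  qed
  also have "(\<integral>\<^sup>+\<omega>. Zs (zs j) \<omega> * indicator (A - E) \<omega> \<partial>M) = (\<integral>\<^sup>+\<omega>. Zs (zs (Suc j)) \<omega> * indicator (A - E) \<omega> \<partial>M)"
  proof (rule nn_integral_cong)
    fix \<omega> assume "\<omega> \<in> space M"
    show "Zs (zs j) \<omega> * indicator (A - E) \<omega> = Zs (zs (Suc j)) \<omega> * indicator (A - E) \<omega>"
      using zs_step[of j \<omega>] \<open>\<omega> \<in> space M\<close> by (cases "cond j \<omega>") (auto simp: indicator_def E_def Zs_def Z_stop_def)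
  qed
  also have "\<dots> = c (Suc j) * emeasure M (A - E)" by (rule G2[OF AE])
  also have "\<dots> = (\<integral>\<^sup>+\<omega>. U j \<omega> * indicator (A - E) \<omega> \<partial>M)"
    by (subst int_c_ind) (auto intro!: nn_integral_cong simp: indicator_def E_def U_def cond_def max_def)
  also have "(\<integral>\<^sup>+\<omega>. U j \<omega> * indicator (A \<inter> E) \<omega> \<partial>M) + (\<integral>\<^sup>+\<omega>. U j \<omega> * indicator (A - E) \<omega> \<partial>M)
      = (\<integral>\<^sup>+\<omega>. U j \<omega> * indicator (A \<inter> E \<union> (A - E)) \<omega> \<partial>M)"
    by (rule int_ind_union) auto
  also have "A \<inter> E \<union> (A - E) = A" by blast
  finally show ?thesis .
qed

end

context OS
begin

lemma int_space: "f \<in> borel_measurable M \<Longrightarrow> (\<integral>\<^sup>+\<omega>. f \<omega> * indicator (space M) \<omega> \<partial>M) = (\<integral>\<^sup>+\<omega>. f \<omega> \<partial>M)"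
  by (rule nn_integral_cong) simp

lemma space_B0: "space M \<in> sets (B_filt M X (enat j))"
  using sets.top[of "B_filt M X (enat j)"] by simp

lemma VZ_le: "\<zeta> \<in> T_B M X \<Longrightarrow> (\<integral>\<^sup>+\<omega>. Zs \<zeta> \<omega> \<partial>M) \<le> c 0"
proof -
  assume z: "\<zeta> \<in> T_B M X"
  have "(\<integral>\<^sup>+\<omega>. Zs \<zeta> \<omega> * indicator (space M) \<omega> \<partial>M) \<le> (\<integral>\<^sup>+\<omega>. U 0 \<omega> * indicator (space M) \<omega> \<partial>M)"
    by (rule alpha[OF z _ space_B0]) (simp add: zero_enat_def[symmetric])
  then show ?thesis using Zs_meas[OF z] by (simp add: int_space c_U)
qed

lemma Zs_zs0: "(\<integral>\<^sup>+\<omega>. Zs (zs 0) \<omega> \<partial>M) = c 0"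
  using beta[OF space_B0, of 0] by (simp add: int_space c_U)

lemma V_Z_eq: "V_Z M X H = c 0"
proof -
  have "V_Z M X H = (SUP \<zeta> \<in> T_B M X. \<integral>\<^sup>+\<omega>. Zs \<zeta> \<omega> \<partial>M)"
    unfolding V_Z_def Zs_def ..
  also have "\<dots> = c 0"
  proof (rule antisym)
    show "(SUP \<zeta> \<in> T_B M X. \<integral>\<^sup>+\<omega>. Zs \<zeta> \<omega> \<partial>M) \<le> c 0"
      by (rule SUP_least) (rule VZ_le)
    show "c 0 \<le> (SUP \<zeta> \<in> T_B M X. \<integral>\<^sup>+\<omega>. Zs \<zeta> \<omega> \<partial>M)"
      using Zs_zs0 zs_T_B[of 0] by (metis SUP_upper)
  qed
  finally show ?thesis .
qed

definition genF :: "enat \<Rightarrow> 'a set set" where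
  "genF t = genB t \<union> {{\<omega>\<in>space M. H \<omega> = j - 1} | j. 1 \<le> j \<and> enat j \<le> t}"

lemma F_filt_eq: "F_filt M X H t = sigma (space M) (genF t)"
  unfolding F_filt_def genF_def genB_def ..

lemma Hset_eq_sets: "{\<omega>\<in>space M. H \<omega> = k} \<in> sets M"
proof -
  have "H -` {k} \<inter> space M \<in> sets M" by (rule measurable_sets[OF H_meas]) simp
  moreover have "H -` {k} \<inter> space M = {\<omega>\<in>space M. H \<omega> = k}" by auto
  ultimately show ?thesis by simp
qed

lemma genF_sets: "genF t \<subseteq> sets M"
  unfolding genF_def using genB_sets Hset_eq_sets by blast

lemma genF_Pow: "genF t \<subseteq> Pow (space M)"
  using genF_sets sets.sets_into_space by blast

lemma sets_F: "sets (F_filt M X H t) = sigma_sets (space M) (genF t)"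
  unfolding F_filt_eq using genF_Pow by (simp add: sets_measure_of)

lemma space_F[simp]: "space (F_filt M X H t) = space M"
  unfolding F_filt_eq using genF_Pow by (simp add: space_measure_of)

lemma B_sub_F: "sets (B_filt M X t) \<subseteq> sets (F_filt M X H t)"
  unfolding sets_F sets_B genF_def by (rule sigma_sets_mono') auto

lemma F_mono: "s \<le> t \<Longrightarrow> sets (F_filt M X H s) \<subseteq> sets (F_filt M X H t)"
  unfolding sets_F genF_def genB_def
  by (rule sigma_sets_mono') (blast intro: order_trans)

lemma TB_Tstar: "\<zeta> \<in> T_B M X \<Longrightarrow> stopping_time (F_filt M X H) \<zeta>"
  unfolding T_B_def
proof (intro stopping_timeI)
  fix t assume "\<zeta> \<in> {\<zeta>. stopping_time (B_filt M X) \<zeta>}"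
  then have "Measurable.pred (B_filt M X t) (\<lambda>x. \<zeta> x \<le> t)" by (simp add: stopping_timeD)
  then show "Measurable.pred (F_filt M X H t) (\<lambda>x. \<zeta> x \<le> t)"
    unfolding pred_def using B_sub_F by auto
qed

lemma H1_stop: "stopping_time (F_filt M X H) (\<lambda>\<omega>. enat (H \<omega> + 1))"
proof (intro stopping_timeI)
  fix t :: enat
  show "Measurable.pred (F_filt M X H t) (\<lambda>\<omega>. enat (H \<omega> + 1) \<le> t)"
  proof (cases t)
    case infinity then show ?thesis by simp
  next
    case (enat n)
    have "{\<omega>\<in>space M. enat (H \<omega> + 1) \<le> enat n} = (\<Union>j\<in>{1..n}. {\<omega>\<in>space M. H \<omega> = j - 1})"
      by (auto intro!: bexI[of _ "Suc (H _)"])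
    also have "\<dots> \<in> sets (F_filt M X H (enat n))"
    proof (intro sets.finite_UN)
      fix j assume "j \<in> {1..n}"
      then have "{\<omega>\<in>space M. H \<omega> = j - 1} \<in> genF (enat n)" unfolding genF_def by auto
      then show "{\<omega>\<in>space M. H \<omega> = j - 1} \<in> sets (F_filt M X H (enat n))" unfolding sets_F by auto
    qed simp
    finally show ?thesis unfolding pred_def enat by simp
  qed
qed

lemma min_Tstar: "\<zeta> \<in> T_B M X \<Longrightarrow> (\<lambda>\<omega>. min (\<zeta> \<omega>) (enat (H \<omega> + 1))) \<in> T_star M X H"
  unfolding T_star_def using stopping_time_min[OF TB_Tstar H1_stop] by simp

lemma Xe_meas_B: "(\<lambda>\<omega>. ennreal (X i \<omega>)) \<in> borel_measurable (B_filt M X (enat i))"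
proof (cases "i = 0")
  case True
  have "(\<lambda>\<omega>. 0::ennreal) \<in> borel_measurable (B_filt M X (enat i))" by simp
  then show ?thesis
    by (rule measurable_cong[THEN iffD1, rotated]) (simp add: True X0)
next
  case False
  then show ?thesis using X_meas_B[of i "enat i"] by simp
qed

definition Ymin :: "('a \<Rightarrow> enat) \<Rightarrow> 'a \<Rightarrow> ennreal" where
  "Ymin \<zeta> \<omega> = ennreal (Y_stop X H (\<lambda>\<omega>'. min (\<zeta> \<omega>') (enat (H \<omega>' + 1))) \<omega>)"

lemma Y_decomp:
  assumes "\<omega> \<in> space M"
  shows "Ymin \<zeta> \<omega> = (\<Sum>i. ennreal (X i \<omega>) * indicator (Seq \<zeta> i) \<omega> * indicator {\<omega>\<in>space M. i \<le> H \<omega>} \<omega>)"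
proof (cases "\<zeta> \<omega>")
  case (enat n)
  have "(\<lambda>i. ennreal (X i \<omega>) * indicator (Seq \<zeta> i) \<omega> * indicator {\<omega>\<in>space M. i \<le> H \<omega>} \<omega>)
      = (\<lambda>i. if i = n then (if n \<le> H \<omega> then ennreal (X n \<omega>) else 0) else 0)"
    using assms enat by (auto simp: Seq_def indicator_def)
  then have "(\<Sum>i. ennreal (X i \<omega>) * indicator (Seq \<zeta> i) \<omega> * indicator {\<omega>\<in>space M. i \<le> H \<omega>} \<omega>)
      = (if n \<le> H \<omega> then ennreal (X n \<omega>) else 0)"
    using sums_unique[OF sums_single[of n "\<lambda>_. (if n \<le> H \<omega> then ennreal (X n \<omega>) else 0)"]] by simp
  moreover have "min (\<zeta> \<omega>) (enat (H \<omega> + 1)) = enat (min n (H \<omega> + 1))" using enat by simp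
  ultimately show ?thesis unfolding Ymin_def Y_stop_def by auto
next
  case infinity
  have "(\<lambda>i. ennreal (X i \<omega>) * indicator (Seq \<zeta> i) \<omega> * indicator {\<omega>\<in>space M. i \<le> H \<omega>} \<omega>) = (\<lambda>i. 0)"
    using infinity by (auto simp: Seq_def indicator_def)
  then show ?thesis using infinity unfolding Ymin_def Y_stop_def by simp
qed

lemma F3:
  assumes z: "\<zeta> \<in> T_B M X"
  shows "(\<integral>\<^sup>+\<omega>. Ymin \<zeta> \<omega> \<partial>M) = (\<integral>\<^sup>+\<omega>. Zs \<zeta> \<omega> \<partial>M)"
proof -
  note [measurable] = Seq_sets[OF z]
  have mX: "(\<lambda>\<omega>. ennreal (X i \<omega>) * indicator (Seq \<zeta> i) \<omega>) \<in> borel_measurable (B_filt M X (enat i))" for i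
    using Xe_meas_B[of i] stB_eq[OF z, of i] by simp
  have "(\<integral>\<^sup>+\<omega>. Ymin \<zeta> \<omega> \<partial>M)
      = (\<integral>\<^sup>+\<omega>. (\<Sum>i. ennreal (X i \<omega>) * indicator (Seq \<zeta> i) \<omega> * indicator {\<omega>\<in>space M. i \<le> H \<omega>} \<omega>) \<partial>M)"
    by (rule nn_integral_cong) (rule Y_decomp)
  also have "\<dots> = (\<Sum>i. \<integral>\<^sup>+\<omega>. ennreal (X i \<omega>) * indicator (Seq \<zeta> i) \<omega> * indicator {\<omega>\<in>space M. i \<le> H \<omega>} \<omega> \<partial>M)"
    by (rule nn_integral_suminf) measurable
  also have "\<dots> = (\<Sum>i. (\<integral>\<^sup>+\<omega>. ennreal (X i \<omega>) * indicator (Seq \<zeta> i) \<omega> \<partial>M) * ennreal (Surv M H i))"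
    by (rule suminf_cong) (rule IND_BH[OF mX])
  also have "\<dots> = (\<Sum>i. \<integral>\<^sup>+\<omega>. Zn i \<omega> * indicator (space M \<inter> Seq \<zeta> i) \<omega> \<partial>M)"
  proof (rule suminf_cong)
    fix i
    have "(\<integral>\<^sup>+\<omega>. Zn i \<omega> * indicator (space M \<inter> Seq \<zeta> i) \<omega> \<partial>M)
        = (\<integral>\<^sup>+\<omega>. ennreal (Surv M H i) * (ennreal (X i \<omega>) * indicator (Seq \<zeta> i) \<omega>) \<partial>M)"
      by (rule nn_integral_cong) (auto simp: Zn_def Z_seq_def ennreal_mult Surv_nonneg X_nonneg Seq_def indicator_def)
    also have "\<dots> = ennreal (Surv M H i) * (\<integral>\<^sup>+\<omega>. ennreal (X i \<omega>) * indicator (Seq \<zeta> i) \<omega> \<partial>M)"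
      by (rule nn_integral_cmult) measurable
    finally show "(\<integral>\<^sup>+\<omega>. ennreal (X i \<omega>) * indicator (Seq \<zeta> i) \<omega> \<partial>M) * ennreal (Surv M H i)
        = (\<integral>\<^sup>+\<omega>. Zn i \<omega> * indicator (space M \<inter> Seq \<zeta> i) \<omega> \<partial>M)" by (simp add: mult.commute)
  qed
  also have "\<dots> = (\<integral>\<^sup>+\<omega>. Zs \<zeta> \<omega> * indicator (space M) \<omega> \<partial>M)"
    by (rule int_Zs_decomp[OF z, symmetric]) simp
  also have "\<dots> = (\<integral>\<^sup>+\<omega>. Zs \<zeta> \<omega> \<partial>M)" using Zs_meas[OF z] by (rule int_space)
  finally show ?thesis .
qed

end

context OS
begin

definition Gs :: "nat \<Rightarrow> 'a set" where
  "Gs i = {\<omega>\<in>space M. i \<le> H \<omega>}"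

lemma fact_F:
  assumes A: "A \<in> sets (F_filt M X H (enat i))"
  shows "\<exists>A' \<in> sets (B_filt M X (enat i)). A \<inter> Gs i = A' \<inter> Gs i"
proof -
  have "A \<in> sigma_sets (space M) (genF (enat i))" using A unfolding sets_F .
  then have "\<exists>A' \<in> sigma_sets (space M) (genB (enat i)). A \<inter> Gs i = A' \<inter> Gs i"
  proof (induction rule: sigma_sets.induct)
    case (Basic a)
    show ?case
    proof (cases "a \<in> genB (enat i)")
      case True
      then show ?thesis by (intro bexI[of _ a]) auto
    next
      case False
      with Basic obtain j where j: "1 \<le> j" "enat j \<le> enat i" "a = {\<omega>\<in>space M. H \<omega> = j - 1}"
        unfolding genF_def by auto
      then have "a \<inter> Gs i = {} \<inter> Gs i" unfolding Gs_def by auto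
      then show ?thesis by (intro bexI[of _ "{}"]) (auto intro: sigma_sets.Empty)
    qed
  next
    case Empty
    show ?case by (intro bexI[of _ "{}"]) (auto intro: sigma_sets.Empty)
  next
    case (Compl a)
    then obtain a' where a': "a' \<in> sigma_sets (space M) (genB (enat i))" "a \<inter> Gs i = a' \<inter> Gs i" by auto
    have "(space M - a) \<inter> Gs i = (space M - a') \<inter> Gs i"
      using a'(2) unfolding Gs_def by blast
    then show ?case using a'(1) by (intro bexI[of _ "space M - a'"]) (auto intro: sigma_sets.Compl)
  next
    case (Union a)
    then have "\<forall>n. \<exists>a'. a' \<in> sigma_sets (space M) (genB (enat i)) \<and> a n \<inter> Gs i = a' \<inter> Gs i" by blast
    then obtain f where f: "\<And>n. f n \<in> sigma_sets (space M) (genB (enat i))" "\<And>n. a n \<inter> Gs i = f n \<inter> Gs i"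
      by metis
    have "(\<Union>n. a n) \<inter> Gs i = (\<Union>n. f n) \<inter> Gs i" using f(2) by blast
    then show ?case using f(1) by (intro bexI[of _ "\<Union>n. f n"]) (auto intro: sigma_sets.Union)
  qed
  then show ?thesis unfolding sets_B .
qed

lemma stF_le: "\<tau> \<in> T_star M X H \<Longrightarrow> {\<omega>\<in>space M. \<tau> \<omega> \<le> enat t} \<in> sets (F_filt M X H (enat t))"
  using stopping_timeD[of "F_filt M X H" \<tau> "enat t"] unfolding T_star_def pred_def by simp

lemma stF_eq: "\<tau> \<in> T_star M X H \<Longrightarrow> Seq \<tau> t \<in> sets (F_filt M X H (enat t))"
proof (cases t)
  case 0
  assume z: "\<tau> \<in> T_star M X H"
  have "Seq \<tau> t = {\<omega>\<in>space M. \<tau> \<omega> \<le> enat 0}"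
    unfolding Seq_def 0 by (auto simp: zero_enat_def[symmetric])
  then show ?thesis using stF_le[OF z, of 0] 0 by simp
next
  case (Suc s)
  assume z: "\<tau> \<in> T_star M X H"
  have "Seq \<tau> t = {\<omega>\<in>space M. \<tau> \<omega> \<le> enat t} - {\<omega>\<in>space M. \<tau> \<omega> \<le> enat s}"
  proof -
    have "\<tau> \<omega> = enat (Suc s) \<longleftrightarrow> \<tau> \<omega> \<le> enat (Suc s) \<and> \<not> \<tau> \<omega> \<le> enat s" for \<omega>
      by (cases "\<tau> \<omega>") auto
    then show ?thesis unfolding Seq_def Suc by blast
  qed
  moreover have "{\<omega>\<in>space M. \<tau> \<omega> \<le> enat s} \<in> sets (F_filt M X H (enat t))"
    using stF_le[OF z, of s] F_mono[of "enat s" "enat t"] Suc by auto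
  ultimately show ?thesis using stF_le[OF z, of t] by auto
qed

lemma VY_le:
  assumes tau: "\<tau> \<in> T_star M X H"
  shows "(\<integral>\<^sup>+\<omega>. ennreal (Y_stop X H \<tau> \<omega>) \<partial>M) \<le> c 0"
proof -
  have "\<forall>i. \<exists>C. C \<in> sets (B_filt M X (enat i)) \<and> Seq \<tau> i \<inter> Gs i = C \<inter> Gs i"
    using fact_F[OF stF_eq[OF tau]] by blast
  then have "\<exists>C. \<forall>i. C i \<in> sets (B_filt M X (enat i)) \<and> Seq \<tau> i \<inter> Gs i = C i \<inter> Gs i"
    by (rule choice)
  then obtain C where C0: "\<forall>i. C i \<in> sets (B_filt M X (enat i)) \<and> Seq \<tau> i \<inter> Gs i = C i \<inter> Gs i"
    by blast
  have C: "\<And>i. C i \<in> sets (B_filt M X (enat i))" "\<And>i. Seq \<tau> i \<inter> Gs i = C i \<inter> Gs i"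
    using C0 by auto
  define D where "D i = C i - (\<Union>j<i. C j)" for i
  have D_B: "D i \<in> sets (B_filt M X (enat i))" for i
  proof -
    have "C j \<in> sets (B_filt M X (enat i))" if "j < i" for j
      using C(1)[of j] B_mono[of "enat j" "enat i"] that by auto
    then have "(\<Union>j<i. C j) \<in> sets (B_filt M X (enat i))" by (intro sets.finite_UN) auto
    then show ?thesis unfolding D_def using C(1) by auto
  qed
  have D_sp: "D i \<subseteq> space M" for i using B_sets_space[OF D_B] .
  have disj: "\<omega> \<in> D i \<Longrightarrow> \<omega> \<in> D k \<Longrightarrow> i = k" for \<omega> i k
  proof (rule ccontr)
    assume "\<omega> \<in> D i" "\<omega> \<in> D k" "i \<noteq> k"
    then show False unfolding D_def by (cases "i < k") auto
  qed
  define \<zeta> where "\<zeta> \<omega> = (if \<exists>i. \<omega> \<in> D i then enat (LEAST i. \<omega> \<in> D i) else \<infinity>)" for \<omega>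
  have zeq: "\<zeta> \<omega> = enat k \<longleftrightarrow> \<omega> \<in> D k" for \<omega> k
  proof
    assume "\<zeta> \<omega> = enat k"
    then have ex: "\<exists>i. \<omega> \<in> D i" and l: "(LEAST i. \<omega> \<in> D i) = k" unfolding \<zeta>_def by (auto split: if_splits)
    from ex obtain i where "\<omega> \<in> D i" by blast
    then have "\<omega> \<in> D (LEAST i. \<omega> \<in> D i)" by (rule LeastI)
    then show "\<omega> \<in> D k" using l by simp
  next
    assume k: "\<omega> \<in> D k"
    have "(LEAST i. \<omega> \<in> D i) = k"
    proof (rule Least_equality)
      show "\<omega> \<in> D k" by (rule k)
      fix y assume "\<omega> \<in> D y"
      then show "k \<le> y" using disj[OF k] by simp
    qed
    then show "\<zeta> \<omega> = enat k" using k unfolding \<zeta>_def by auto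
  qed
  have zT: "\<zeta> \<in> T_B M X"
    unfolding T_B_def
  proof (intro CollectI stopping_timeI)
    fix t :: enat
    show "Measurable.pred (B_filt M X t) (\<lambda>\<omega>. \<zeta> \<omega> \<le> t)"
    proof (cases t)
      case infinity then show ?thesis by simp
    next
      case (enat n)
      have "\<zeta> \<omega> \<le> enat n \<longleftrightarrow> (\<exists>i\<in>{..n}. \<omega> \<in> D i)" for \<omega>
      proof -
        have "\<zeta> \<omega> \<le> enat n \<longleftrightarrow> (\<exists>i\<in>{..n}. \<zeta> \<omega> = enat i)"
          by (cases "\<zeta> \<omega>") auto
        then show ?thesis using zeq by simp
      qed
      then have "{\<omega>\<in>space M. \<zeta> \<omega> \<le> enat n} = (\<Union>i\<in>{..n}. D i)" using D_sp by auto
      also have "\<dots> \<in> sets (B_filt M X (enat n))"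
      proof (intro sets.finite_UN)
        fix i assume "i \<in> {..n}"
        then show "D i \<in> sets (B_filt M X (enat n))" using D_B[of i] B_mono[of "enat i" "enat n"] by auto
      qed simp
      finally show ?thesis unfolding pred_def enat by simp
    qed
  qed
  have key: "\<tau> \<omega> = enat k \<longleftrightarrow> \<zeta> \<omega> = enat k" if "\<omega> \<in> space M" "k \<le> H \<omega>" for \<omega> k
  proof
    assume tk: "\<tau> \<omega> = enat k"
    then have "\<omega> \<in> Seq \<tau> k \<inter> Gs k" using that unfolding Seq_def Gs_def by auto
    then have Ck: "\<omega> \<in> C k" using C(2)[of k] by auto
    have "\<omega> \<notin> C j" if "j < k" for j
    proof
      assume "\<omega> \<in> C j"
      moreover have "\<omega> \<in> Gs j" using \<open>\<omega> \<in> space M\<close> \<open>k \<le> H \<omega>\<close> \<open>j < k\<close> unfolding Gs_def by auto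
      ultimately have "\<omega> \<in> Seq \<tau> j" using C(2)[of j] by auto
      then show False using tk \<open>j < k\<close> unfolding Seq_def by auto
    qed
    then have "\<omega> \<in> D k" using Ck unfolding D_def by auto
    then show "\<zeta> \<omega> = enat k" using zeq by simp
  next
    assume "\<zeta> \<omega> = enat k"
    then have "\<omega> \<in> C k" using zeq unfolding D_def by auto
    moreover have "\<omega> \<in> Gs k" using that unfolding Gs_def by auto
    ultimately have "\<omega> \<in> Seq \<tau> k" using C(2)[of k] by auto
    then show "\<tau> \<omega> = enat k" unfolding Seq_def by auto
  qed
  have pw: "ennreal (Y_stop X H \<tau> \<omega>) = Ymin \<zeta> \<omega>" if "\<omega> \<in> space M" for \<omega>
  proof (cases "\<exists>k. k \<le> H \<omega> \<and> \<tau> \<omega> = enat k")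
    case True
    then obtain k where k: "k \<le> H \<omega>" "\<tau> \<omega> = enat k" by auto
    then have "\<zeta> \<omega> = enat k" using key[OF that k(1)] by simp
    then show ?thesis using k unfolding Ymin_def Y_stop_def by (simp add: min_def)
  next
    case False
    then have t0: "Y_stop X H \<tau> \<omega> = 0" unfolding Y_stop_def by (cases "\<tau> \<omega>") auto
    have "\<not> (k \<le> H \<omega> \<and> \<zeta> \<omega> = enat k)" for k using False key[OF that] by blast
    then have "Y_stop X H (\<lambda>\<omega>'. min (\<zeta> \<omega>') (enat (H \<omega>' + 1))) \<omega> = 0"
      unfolding Y_stop_def by (cases "\<zeta> \<omega>") (auto simp: min_def)
    then show ?thesis using t0 unfolding Ymin_def by simp
  qed
  have "(\<integral>\<^sup>+\<omega>. ennreal (Y_stop X H \<tau> \<omega>) \<partial>M) = (\<integral>\<^sup>+\<omega>. Ymin \<zeta> \<omega> \<partial>M)"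
    by (rule nn_integral_cong) (rule pw)
  also have "\<dots> = (\<integral>\<^sup>+\<omega>. Zs \<zeta> \<omega> \<partial>M)" by (rule F3[OF zT])
  also have "\<dots> \<le> c 0" by (rule VZ_le[OF zT])
  finally show ?thesis .
qed

lemma V_Y_eq: "V_Y M X H = c 0"
proof -
  have "V_Y M X H = (SUP \<tau> \<in> T_star M X H. \<integral>\<^sup>+\<omega>. ennreal (Y_stop X H \<tau> \<omega>) \<partial>M)"
    unfolding V_Y_def ..
  also have "\<dots> = c 0"
  proof (rule antisym)
    show "(SUP \<tau> \<in> T_star M X H. \<integral>\<^sup>+\<omega>. ennreal (Y_stop X H \<tau> \<omega>) \<partial>M) \<le> c 0"
      by (rule SUP_least) (rule VY_le)
    have e: "(\<integral>\<^sup>+\<omega>. Ymin (zs 0) \<omega> \<partial>M) = c 0"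
      using F3[OF zs_T_B[of 0]] Zs_zs0 by (rule trans)
    have e': "(\<integral>\<^sup>+\<omega>. ennreal (Y_stop X H (\<lambda>\<omega>'. min (zs 0 \<omega>') (enat (H \<omega>' + 1))) \<omega>) \<partial>M) = c 0"
      using e unfolding Ymin_def .
    show "c 0 \<le> (SUP \<tau> \<in> T_star M X H. \<integral>\<^sup>+\<omega>. ennreal (Y_stop X H \<tau> \<omega>) \<partial>M)"
      by (rule SUP_upper2[OF min_Tstar[OF zs_T_B[of 0]]]) (simp only: e' order_refl)
  qed
  finally show ?thesis .
qed

end

context OS
begin

lemma good:
  assumes z: "\<zeta> \<in> T_B M X" and v: "(\<integral>\<^sup>+\<omega>. Zs \<zeta> \<omega> \<partial>M) = c 0"
  shows "\<zeta> \<in> T_B M X \<and> (\<integral>\<^sup>+ \<omega>. ennreal (Z_stop M X H \<zeta> \<omega>) \<partial>M) = V_Z M X H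
         \<and> (\<lambda>\<omega>. min (\<zeta> \<omega>) (enat (H \<omega> + 1))) \<in> T_star M X H
         \<and> (\<integral>\<^sup>+ \<omega>. ennreal (Y_stop X H (\<lambda>\<omega>'. min (\<zeta> \<omega>') (enat (H \<omega>' + 1))) \<omega>) \<partial>M) = V_Y M X H"
proof (intro conjI z min_Tstar)
  show "(\<integral>\<^sup>+ \<omega>. ennreal (Z_stop M X H \<zeta> \<omega>) \<partial>M) = V_Z M X H"
    using v unfolding V_Z_eq Zs_def .
  have "(\<integral>\<^sup>+\<omega>. Ymin \<zeta> \<omega> \<partial>M) = c 0" using F3[OF z] v by (rule trans)
  then show "(\<integral>\<^sup>+ \<omega>. ennreal (Y_stop X H (\<lambda>\<omega>'. min (\<zeta> \<omega>') (enat (H \<omega>' + 1))) \<omega>) \<partial>M) = V_Y M X H"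
    unfolding V_Y_eq Ymin_def .
qed

lemma Zs_cong_AE:
  assumes "AE \<omega> in M. \<zeta> \<omega> = \<zeta>' \<omega>"
  shows "(\<integral>\<^sup>+\<omega>. Zs \<zeta> \<omega> \<partial>M) = (\<integral>\<^sup>+\<omega>. Zs \<zeta>' \<omega> \<partial>M)"
  by (rule nn_integral_cong_AE) (use assms in \<open>auto simp: Zs_def Z_stop_def\<close>)

lemma nce_U: "AE \<omega> in M. nn_cond_exp M (B_filt M X (enat j)) (U (Suc j)) \<omega> = c (Suc j)"
proof -
  interpret sigma_finite_subalgebra M "B_filt M X (enat j)" by (rule sfs_B)
  have "AE \<omega> in M. (\<lambda>_. c (Suc j)) \<omega> = nn_cond_exp M (B_filt M X (enat j)) (U (Suc j)) \<omega>"
  proof (rule nn_cond_exp_charact)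
    fix A assume A: "A \<in> sets (B_filt M X (enat j))"
    have AM: "A \<in> sets M" using B_sets_M[OF A] .
    show "(\<integral>\<^sup>+\<omega>\<in>A. U (Suc j) \<omega> \<partial>M) = (\<integral>\<^sup>+\<omega>\<in>A. c (Suc j) \<partial>M)"
      using IND_U[OF A] nn_integral_cmult_indicator[OF AM, of "c (Suc j)"] by simp
  qed auto
  then show ?thesis by auto
qed

lemma supp_zero:
  assumes m: "supp_sup M H = enat m" and n: "m < n"
  shows "measure M {\<omega>\<in>space M. H \<omega> = n} = 0"
proof (rule ccontr)
  assume "measure M {\<omega>\<in>space M. H \<omega> = n} \<noteq> 0"
  then have "measure M {\<omega>\<in>space M. H \<omega> = n} > 0" using measure_nonneg[of M] by (simp add: order_less_le)
  then have "enat n \<le> supp_sup M H" unfolding supp_sup_def by (intro Sup_upper) auto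
  then show False using m n by simp
qed

lemma Surv_zero:
  assumes m: "supp_sup M H = enat m" and k: "m < k"
  shows "Surv M H k = 0"
proof -
  have null: "{\<omega>\<in>space M. H \<omega> = n + k} \<in> null_sets M" for n
  proof -
    have "measure M {\<omega>\<in>space M. H \<omega> = n + k} = 0" using supp_zero[OF m] k by simp
    then show ?thesis using Hset_eq_sets[of "n + k"] by (simp add: emeasure_eq_measure null_sets_def)
  qed
  have "{\<omega>\<in>space M. k \<le> H \<omega>} = (\<Union>n. {\<omega>\<in>space M. H \<omega> = n + k})"
  proof auto
    fix x assume "x \<in> space M" "k \<le> H x"
    then show "\<exists>n. H x = n + k" by (intro exI[of _ "H x - k"]) simp
  qed
  also have "\<dots> \<in> null_sets M" using null by (intro null_sets_UN) auto
  finally show ?thesis unfolding Surv_def by (simp add: measure_def null_sets_def)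
qed

lemma c_zero:
  assumes m: "supp_sup M H = enat m" and k: "m < k"
  shows "c k = 0"
proof -
  have "Tl k = 0" unfolding Tl_def using Surv_zero[OF m] k by simp
  then show ?thesis using c_le_Tl[of k] by simp
qed

lemma BI_aux_meas[measurable]: "BI_aux M X H m k \<in> borel_measurable M"
  by (induction k) (simp_all add: Z_meas)

lemma BI_ae:
  assumes m: "supp_sup M H = enat m"
  shows "k \<le> m \<Longrightarrow> AE \<omega> in M. BI_aux M X H m k \<omega> = U (m - k) \<omega>"
proof (induction k)
  case 0
  have "BI_aux M X H m 0 \<omega> = U m \<omega>" for \<omega>
    using c_zero[OF m, of "Suc m"] by (simp add: U_def Zn_def)
  then show ?case by simp
next
  case (Suc k)
  define j where "j = m - Suc k"
  have mk: "m - k = Suc j" using Suc.prems unfolding j_def by simp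
  interpret sigma_finite_subalgebra M "B_filt M X (enat j)" by (rule sfs_B)
  have IH: "AE \<omega> in M. BI_aux M X H m k \<omega> = U (Suc j) \<omega>" using Suc mk by simp
  have "AE \<omega> in M. nn_cond_exp M (B_filt M X (enat j)) (BI_aux M X H m k) \<omega>
      = nn_cond_exp M (B_filt M X (enat j)) (U (Suc j)) \<omega>"
    by (rule nn_cond_exp_cong[OF IH]) auto
  with nce_U[of j] have "AE \<omega> in M. nn_cond_exp M (B_filt M X (enat j)) (BI_aux M X H m k) \<omega> = c (Suc j)"
    by eventually_elim simp
  then show ?case
  proof eventually_elim
    case (elim \<omega>)
    then show ?case unfolding j_def by (simp add: U_def Zn_def)
  qed
qed

lemma BI_nce:
  assumes m: "supp_sup M H = enat m" and i: "i < m"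
  shows "AE \<omega> in M. nn_cond_exp M (B_filt M X (enat i)) (BI_W M X H m (Suc i)) \<omega> = c (Suc i)"
proof -
  interpret sigma_finite_subalgebra M "B_filt M X (enat i)" by (rule sfs_B)
  have "AE \<omega> in M. BI_W M X H m (Suc i) \<omega> = U (Suc i) \<omega>"
    using BI_ae[OF m, of "m - Suc i"] i unfolding BI_W_def by simp
  then have "AE \<omega> in M. nn_cond_exp M (B_filt M X (enat i)) (BI_W M X H m (Suc i)) \<omega>
      = nn_cond_exp M (B_filt M X (enat i)) (U (Suc i)) \<omega>"
    by (rule nn_cond_exp_cong) (auto simp: BI_W_def)
  with nce_U[of i] show ?thesis by eventually_elim simp
qed

lemma BI_T_B: "BI_rule M X H m \<in> T_B M X"
  unfolding T_B_def
proof (intro CollectI stopping_timeI)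
  fix t :: enat
  define P where "P i \<omega> \<longleftrightarrow> i = m \<or> (i < m \<and> ennreal (Z_seq M X H i \<omega>) \<ge> nn_cond_exp M (B_filt M X (enat i)) (BI_W M X H m (Suc i)) \<omega>)" for i \<omega>
  have BI: "BI_rule M X H m \<omega> = enat (LEAST i. P i \<omega>)" for \<omega>
    unfolding BI_rule_def P_def ..
  show "Measurable.pred (B_filt M X t) (\<lambda>\<omega>. BI_rule M X H m \<omega> \<le> t)"
  proof (cases t)
    case infinity then show ?thesis by simp
  next
    case (enat n)
    have eq: "BI_rule M X H m \<omega> \<le> enat n \<longleftrightarrow> (\<exists>i\<in>{..n}. P i \<omega>)" for \<omega>
    proof
      assume "BI_rule M X H m \<omega> \<le> enat n"
      then have "(LEAST i. P i \<omega>) \<le> n" using BI by simp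
      moreover have "P (LEAST i. P i \<omega>) \<omega>" by (rule LeastI[of _ m]) (simp add: P_def)
      ultimately show "\<exists>i\<in>{..n}. P i \<omega>" by auto
    next
      assume "\<exists>i\<in>{..n}. P i \<omega>"
      then obtain i where "i \<le> n" "P i \<omega>" by auto
      then have "(LEAST i. P i \<omega>) \<le> n" using Least_le[of "\<lambda>i. P i \<omega>" i] by simp
      then show "BI_rule M X H m \<omega> \<le> enat n" using BI by simp
    qed
    have Pi: "{\<omega>\<in>space M. P i \<omega>} \<in> sets (B_filt M X (enat n))" if "i \<le> n" for i
    proof -
      have [measurable]: "Z_seq M X H i \<in> borel_measurable (B_filt M X (enat i))" by (rule Z_meas_B) simp
      have "Measurable.pred (B_filt M X (enat i)) (\<lambda>\<omega>. P i \<omega>)" unfolding P_def by measurable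
      then have "{\<omega>\<in>space M. P i \<omega>} \<in> sets (B_filt M X (enat i))" unfolding pred_def by simp
      then show ?thesis using B_mono[of "enat i" "enat n"] that by auto
    qed
    have "{\<omega>\<in>space M. \<exists>i\<in>{..n}. P i \<omega>} = (\<Union>i\<in>{..n}. {\<omega>\<in>space M. P i \<omega>})" by auto
    also have "\<dots> \<in> sets (B_filt M X (enat n))" by (intro sets.finite_UN) (auto intro: Pi)
    finally show ?thesis unfolding pred_def enat eq by simp
  qed
qed

lemma BI_ae_zs:
  assumes m: "supp_sup M H = enat m"
  shows "AE \<omega> in M. BI_rule M X H m \<omega> = zs 0 \<omega>"
proof -
  have "\<forall>i. AE \<omega> in M. i < m \<longrightarrow> nn_cond_exp M (B_filt M X (enat i)) (BI_W M X H m (Suc i)) \<omega> = c (Suc i)"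
  proof
    fix i show "AE \<omega> in M. i < m \<longrightarrow> nn_cond_exp M (B_filt M X (enat i)) (BI_W M X H m (Suc i)) \<omega> = c (Suc i)"
      using BI_nce[OF m, of i] by (cases "i < m") auto
  qed
  then have "AE \<omega> in M. \<forall>i. i < m \<longrightarrow> nn_cond_exp M (B_filt M X (enat i)) (BI_W M X H m (Suc i)) \<omega> = c (Suc i)"
    by (simp add: AE_all_countable)
  then show ?thesis
  proof eventually_elim
    case (elim \<omega>)
    have cm: "cond m \<omega>" using c_zero[OF m, of "Suc m"] by (simp add: cond_def)
    let ?l = "LEAST i. cond i \<omega>"
    have l: "cond ?l \<omega>" by (rule LeastI[of _ m]) (rule cm)
    have lm: "?l \<le> m" by (rule Least_le) (rule cm)
    have "(LEAST i. i = m \<or> (i < m \<and> ennreal (Z_seq M X H i \<omega>) \<ge> nn_cond_exp M (B_filt M X (enat i)) (BI_W M X H m (Suc i)) \<omega>)) = ?l"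
    proof (rule Least_equality)
      show "?l = m \<or> (?l < m \<and> ennreal (Z_seq M X H ?l \<omega>) \<ge> nn_cond_exp M (B_filt M X (enat ?l)) (BI_W M X H m (Suc ?l)) \<omega>)"
        using l lm elim by (auto simp: cond_def Zn_def order.order_iff_strict)
    next
      fix y assume "y = m \<or> (y < m \<and> ennreal (Z_seq M X H y \<omega>) \<ge> nn_cond_exp M (B_filt M X (enat y)) (BI_W M X H m (Suc y)) \<omega>)"
      then have "cond y \<omega>" using cm elim by (auto simp: cond_def Zn_def)
      then show "?l \<le> y" by (rule Least_le)
    qed
    moreover have "zs 0 \<omega> = enat ?l" using cm unfolding zs_def by auto
    ultimately show ?case unfolding BI_rule_def by simp
  qed
qed

lemma BI_good:
  assumes m: "supp_sup M H = enat m"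
  shows "(\<integral>\<^sup>+\<omega>. Zs (BI_rule M X H m) \<omega> \<partial>M) = c 0"
  using Zs_cong_AE[OF BI_ae_zs[OF m]] Zs_zs0 by simp

end

context OS
begin

lemma ae_le_from_int:
  fixes f g :: "'a \<Rightarrow> ennreal"
  assumes fF[measurable]: "f \<in> borel_measurable (B_filt M X t)" and gF[measurable]: "g \<in> borel_measurable (B_filt M X t)"
    and fin: "(\<integral>\<^sup>+\<omega>. g \<omega> \<partial>M) \<noteq> \<infinity>"
    and le: "\<And>A. A \<in> sets (B_filt M X t) \<Longrightarrow> (\<integral>\<^sup>+\<omega>. f \<omega> * indicator A \<omega> \<partial>M) \<le> (\<integral>\<^sup>+\<omega>. g \<omega> * indicator A \<omega> \<partial>M)"
  shows "AE \<omega> in M. f \<omega> \<le> g \<omega>"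
proof -
  have fM[measurable]: "f \<in> borel_measurable M" using measurable_from_subalg[OF subalg_B fF] .
  have gM[measurable]: "g \<in> borel_measurable M" using measurable_from_subalg[OF subalg_B gF] .
  define N where "N = {\<omega>\<in>space M. g \<omega> < f \<omega>}"
  have "Measurable.pred (B_filt M X t) (\<lambda>\<omega>. g \<omega> < f \<omega>)" by measurable
  then have NB: "N \<in> sets (B_filt M X t)" unfolding N_def pred_def by simp
  have NM[measurable]: "N \<in> sets M" using B_sets_M[OF NB] .
  have ord1: "AE \<omega> in M. g \<omega> * indicator N \<omega> \<le> f \<omega> * indicator N \<omega>"
    by (rule AE_I2) (auto simp: N_def indicator_def)
  have fin': "(\<integral>\<^sup>+\<omega>. g \<omega> * indicator N \<omega> \<partial>M) \<noteq> \<infinity>"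
  proof -
    have "(\<integral>\<^sup>+\<omega>. g \<omega> * indicator N \<omega> \<partial>M) \<le> (\<integral>\<^sup>+\<omega>. g \<omega> \<partial>M)"
      by (intro nn_integral_mono) (auto simp: indicator_def)
    then show ?thesis using fin by (auto simp: top_unique)
  qed
  have "AE \<omega> in M. f \<omega> * indicator N \<omega> \<le> g \<omega> * indicator N \<omega>"
  proof (rule ccontr)
    assume "\<not> (AE \<omega> in M. f \<omega> * indicator N \<omega> \<le> g \<omega> * indicator N \<omega>)"
    then have "(\<integral>\<^sup>+\<omega>. g \<omega> * indicator N \<omega> \<partial>M) < (\<integral>\<^sup>+\<omega>. f \<omega> * indicator N \<omega> \<partial>M)"
      by (intro nn_integral_less[OF _ _ fin' ord1]) auto
    then show False using le[OF NB] by simp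
  qed
  then show ?thesis using AE_space
  proof eventually_elim
    case (elim \<omega>)
    then show ?case by (cases "\<omega> \<in> N") (auto simp: N_def indicator_def not_less)
  qed
qed

lemma c_fin: "c k \<noteq> \<infinity>"
proof -
  have "Tl k < \<top>" unfolding Tl_def using EXv_fin by (simp add: ennreal_mult_less_top)
  then show ?thesis using c_le_Tl[of k] by (auto simp: top_unique)
qed

lemma V_ae_U:
  assumes V: "is_snell_envelope M X H V"
  shows "AE \<omega> in M. V i \<omega> = U i \<omega>"
proof -
  interpret sigma_finite_subalgebra M "B_filt M X (enat i)" by (rule sfs_B)
  have es: "is_ess_sup M ((\<lambda>\<zeta>. nn_cond_exp M (B_filt M X (enat i)) (\<lambda>\<omega>. ennreal (Z_stop M X H \<zeta> \<omega>))) ` T_B_from M X i) (V i)"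
    using V unfolding is_snell_envelope_def by blast
  have Zs_eta: "(\<lambda>\<omega>. ennreal (Z_stop M X H \<zeta> \<omega>)) = Zs \<zeta>" for \<zeta> unfolding Zs_def ..
  have up: "AE \<omega> in M. nn_cond_exp M (B_filt M X (enat i)) (Zs \<zeta>) \<omega> \<le> U i \<omega>" if z: "\<zeta> \<in> T_B_from M X i" for \<zeta>
  proof (rule ae_le_from_int)
    have zT: "\<zeta> \<in> T_B M X" and ge: "\<And>\<omega>. \<omega> \<in> space M \<Longrightarrow> enat i \<le> \<zeta> \<omega>" using z unfolding T_B_from_def by auto
    show "U i \<in> borel_measurable (B_filt M X (enat i))" by (rule U_meas_B) simp
    show "(\<integral>\<^sup>+\<omega>. U i \<omega> \<partial>M) \<noteq> \<infinity>" using c_fin[of i] c_U[of i] by simp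
    fix A assume A: "A \<in> sets (B_filt M X (enat i))"
    have "(\<integral>\<^sup>+\<omega>. nn_cond_exp M (B_filt M X (enat i)) (Zs \<zeta>) \<omega> * indicator A \<omega> \<partial>M)
        = (\<integral>\<^sup>+\<omega>. indicator A \<omega> * nn_cond_exp M (B_filt M X (enat i)) (Zs \<zeta>) \<omega> \<partial>M)"
      by (simp add: mult.commute)
    also have "\<dots> = (\<integral>\<^sup>+\<omega>. indicator A \<omega> * Zs \<zeta> \<omega> \<partial>M)"
      by (rule nn_cond_exp_intg) (use A Zs_meas[OF zT] in auto)
    also have "\<dots> = (\<integral>\<^sup>+\<omega>. Zs \<zeta> \<omega> * indicator A \<omega> \<partial>M)" by (simp add: mult.commute)
    also have "\<dots> \<le> (\<integral>\<^sup>+\<omega>. U i \<omega> * indicator A \<omega> \<partial>M)" by (rule alpha[OF zT ge A])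
    finally show "(\<integral>\<^sup>+\<omega>. nn_cond_exp M (B_filt M X (enat i)) (Zs \<zeta>) \<omega> * indicator A \<omega> \<partial>M)
        \<le> (\<integral>\<^sup>+\<omega>. U i \<omega> * indicator A \<omega> \<partial>M)" .
  qed simp
  have VU: "AE \<omega> in M. V i \<omega> \<le> U i \<omega>"
    using es up unfolding is_ess_sup_def Zs_eta by auto
  have zsi: "zs i \<in> T_B_from M X i" unfolding T_B_from_def using zs_T_B zs_ge by auto
  have "AE \<omega> in M. nn_cond_exp M (B_filt M X (enat i)) (Zs (zs i)) \<omega> \<le> V i \<omega>"
    using es zsi unfolding is_ess_sup_def Zs_eta by auto
  moreover have "AE \<omega> in M. U i \<omega> = nn_cond_exp M (B_filt M X (enat i)) (Zs (zs i)) \<omega>"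
  proof (rule nn_cond_exp_charact)
    fix A assume A: "A \<in> sets (B_filt M X (enat i))"
    show "(\<integral>\<^sup>+\<omega>\<in>A. Zs (zs i) \<omega> \<partial>M) = (\<integral>\<^sup>+\<omega>\<in>A. U i \<omega> \<partial>M)"
      using beta[OF A] by simp
  next
    show "U i \<in> borel_measurable (B_filt M X (enat i))" by (rule U_meas_B) simp
  qed simp
  ultimately have "AE \<omega> in M. U i \<omega> \<le> V i \<omega>" by eventually_elim simp
  with VU show ?thesis by eventually_elim simp
qed

lemma snell_nce:
  assumes V: "is_snell_envelope M X H V"
  shows "AE \<omega> in M. nn_cond_exp M (B_filt M X (enat i)) (V (Suc i)) \<omega> = c (Suc i)"
proof -
  interpret sigma_finite_subalgebra M "B_filt M X (enat i)" by (rule sfs_B)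
  have Vm: "V (Suc i) \<in> borel_measurable M"
    using V unfolding is_snell_envelope_def is_ess_sup_def by blast
  have "AE \<omega> in M. nn_cond_exp M (B_filt M X (enat i)) (V (Suc i)) \<omega> = nn_cond_exp M (B_filt M X (enat i)) (U (Suc i)) \<omega>"
    by (rule nn_cond_exp_cong[OF V_ae_U[OF V]]) (auto simp: Vm)
  with nce_U[of i] show ?thesis by eventually_elim simp
qed

lemma snell_T_B: "snell_rule M X H V \<in> T_B M X"
  unfolding T_B_def
proof (intro CollectI stopping_timeI)
  fix t :: enat
  define P where "P i \<omega> \<longleftrightarrow> ennreal (Z_seq M X H i \<omega>) \<ge> nn_cond_exp M (B_filt M X (enat i)) (V (Suc i)) \<omega>" for i \<omega>
  have SR: "snell_rule M X H V \<omega> = (if \<exists>i. P i \<omega> then enat (LEAST i. P i \<omega>) else \<infinity>)" for \<omega>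
    unfolding snell_rule_def P_def ..
  show "Measurable.pred (B_filt M X t) (\<lambda>\<omega>. snell_rule M X H V \<omega> \<le> t)"
  proof (cases t)
    case infinity then show ?thesis by simp
  next
    case (enat n)
    have eq: "snell_rule M X H V \<omega> \<le> enat n \<longleftrightarrow> (\<exists>i\<in>{..n}. P i \<omega>)" for \<omega>
    proof
      assume a: "snell_rule M X H V \<omega> \<le> enat n"
      then have ex: "\<exists>i. P i \<omega>" using SR by (auto split: if_splits)
      then have "(LEAST i. P i \<omega>) \<le> n" using a SR by simp
      moreover have "P (LEAST i. P i \<omega>) \<omega>" using ex by (metis LeastI)
      ultimately show "\<exists>i\<in>{..n}. P i \<omega>" by auto
    next
      assume "\<exists>i\<in>{..n}. P i \<omega>"
      then obtain i where "i \<le> n" "P i \<omega>" by auto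
      then have "(LEAST i. P i \<omega>) \<le> n" using Least_le[of "\<lambda>i. P i \<omega>" i] by simp
      then show "snell_rule M X H V \<omega> \<le> enat n" using SR \<open>P i \<omega>\<close> by auto
    qed
    have Pi: "{\<omega>\<in>space M. P i \<omega>} \<in> sets (B_filt M X (enat n))" if "i \<le> n" for i
    proof -
      have [measurable]: "Z_seq M X H i \<in> borel_measurable (B_filt M X (enat i))" by (rule Z_meas_B) simp
      have "Measurable.pred (B_filt M X (enat i)) (\<lambda>\<omega>. P i \<omega>)" unfolding P_def by measurable
      then have "{\<omega>\<in>space M. P i \<omega>} \<in> sets (B_filt M X (enat i))" unfolding pred_def by simp
      then show ?thesis using B_mono[of "enat i" "enat n"] that by auto
    qed
    have "{\<omega>\<in>space M. \<exists>i\<in>{..n}. P i \<omega>} = (\<Union>i\<in>{..n}. {\<omega>\<in>space M. P i \<omega>})" by auto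
    also have "\<dots> \<in> sets (B_filt M X (enat n))" by (intro sets.finite_UN) (auto intro: Pi)
    finally show ?thesis unfolding pred_def enat eq by simp
  qed
qed

lemma snell_ae_zs:
  assumes V: "is_snell_envelope M X H V"
  shows "AE \<omega> in M. snell_rule M X H V \<omega> = zs 0 \<omega>"
proof -
  have "AE \<omega> in M. \<forall>i. nn_cond_exp M (B_filt M X (enat i)) (V (Suc i)) \<omega> = c (Suc i)"
    using snell_nce[OF V] by (simp add: AE_all_countable)
  then show ?thesis
  proof eventually_elim
    case (elim \<omega>)
    then have "(\<lambda>i. ennreal (Z_seq M X H i \<omega>) \<ge> nn_cond_exp M (B_filt M X (enat i)) (V (Suc i)) \<omega>)
        = (\<lambda>i. 0 \<le> i \<and> cond i \<omega>)"
      by (auto simp: cond_def Zn_def fun_eq_iff)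
    then show ?case unfolding snell_rule_def zs_def by simp
  qed
qed

lemma snell_good:
  assumes V: "is_snell_envelope M X H V"
  shows "(\<integral>\<^sup>+\<omega>. Zs (snell_rule M X H V) \<omega> \<partial>M) = c 0"
  using Zs_cong_AE[OF snell_ae_zs[OF V]] Zs_zs0 by simp

end

theorem theorem5:
  fixes M :: "'a measure" and X :: "nat \<Rightarrow> 'a \<Rightarrow> real" and H :: "'a \<Rightarrow> nat"
  assumes "prob_space M"
    and X_meas: "\<And>i. X i \<in> borel_measurable M"
    and X0: "\<And>\<omega>. \<omega> \<in> space M \<Longrightarrow> X 0 \<omega> = 0"
    and X_nonneg: "\<And>i \<omega>. \<omega> \<in> space M \<Longrightarrow> X i \<omega> \<ge> 0"
    and X_int: "integrable M (X 1)"
    and X_id: "\<And>i. i \<ge> 1 \<Longrightarrow> distr M borel (X i) = distr M borel (X 1)"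
    and H_meas: "H \<in> measurable M (count_space UNIV)"
    and indep: "prob_space.indep_vars M (\<lambda>_. borel)
        (\<lambda>k. case k of None \<Rightarrow> (\<lambda>\<omega>. real (H \<omega>)) | Some j \<Rightarrow> X j) (insert None (Some ` {1..}))"
    and H_int: "integrable M (\<lambda>\<omega>. real (H \<omega>))"
  shows "V_Y M X H = V_Z M X H
    \<and> (\<exists>\<zeta>\<in>T_B M X. (\<integral>\<^sup>+ \<omega>. ennreal (Z_stop M X H \<zeta> \<omega>) \<partial>M) = V_Z M X H
         \<and> (\<lambda>\<omega>. min (\<zeta> \<omega>) (enat (H \<omega> + 1))) \<in> T_star M X H
         \<and> (\<integral>\<^sup>+ \<omega>. ennreal (Y_stop X H (\<lambda>\<omega>'. min (\<zeta> \<omega>') (enat (H \<omega>' + 1))) \<omega>) \<partial>M) = V_Y M X H)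
    \<and> (\<forall>m. supp_sup M H = enat m \<longrightarrow>
         (let \<zeta> = BI_rule M X H m in
           \<zeta> \<in> T_B M X \<and> (\<integral>\<^sup>+ \<omega>. ennreal (Z_stop M X H \<zeta> \<omega>) \<partial>M) = V_Z M X H
         \<and> (\<lambda>\<omega>. min (\<zeta> \<omega>) (enat (H \<omega> + 1))) \<in> T_star M X H
         \<and> (\<integral>\<^sup>+ \<omega>. ennreal (Y_stop X H (\<lambda>\<omega>'. min (\<zeta> \<omega>') (enat (H \<omega>' + 1))) \<omega>) \<partial>M) = V_Y M X H))
    \<and> (supp_sup M H = \<infinity> \<longrightarrow> (\<forall>V. is_snell_envelope M X H V \<longrightarrow>
         (let \<zeta> = snell_rule M X H V in
           \<zeta> \<in> T_B M X \<and> (\<integral>\<^sup>+ \<omega>. ennreal (Z_stop M X H \<zeta> \<omega>) \<partial>M) = V_Z M X H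
         \<and> (\<lambda>\<omega>. min (\<zeta> \<omega>) (enat (H \<omega> + 1))) \<in> T_star M X H
         \<and> (\<integral>\<^sup>+ \<omega>. ennreal (Y_stop X H (\<lambda>\<omega>'. min (\<zeta> \<omega>') (enat (H \<omega>' + 1))) \<omega>) \<partial>M) = V_Y M X H)))"
proof -
  interpret OS M X H
    by (rule OS.intro) (fact assms X_meas X0 X_nonneg X_int X_id H_meas indep H_int)+
  have g0: "zs 0 \<in> T_B M X \<and> (\<integral>\<^sup>+ \<omega>. ennreal (Z_stop M X H (zs 0) \<omega>) \<partial>M) = V_Z M X H
         \<and> (\<lambda>\<omega>. min (zs 0 \<omega>) (enat (H \<omega> + 1))) \<in> T_star M X H
         \<and> (\<integral>\<^sup>+ \<omega>. ennreal (Y_stop X H (\<lambda>\<omega>'. min (zs 0 \<omega>') (enat (H \<omega>' + 1))) \<omega>) \<partial>M) = V_Y M X H"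
    by (rule good[OF zs_T_B Zs_zs0])
  show ?thesis
  proof (intro conjI allI impI)
    show "V_Y M X H = V_Z M X H" using V_Y_eq V_Z_eq by simp
    show "\<exists>\<zeta>\<in>T_B M X. (\<integral>\<^sup>+ \<omega>. ennreal (Z_stop M X H \<zeta> \<omega>) \<partial>M) = V_Z M X H
         \<and> (\<lambda>\<omega>. min (\<zeta> \<omega>) (enat (H \<omega> + 1))) \<in> T_star M X H
         \<and> (\<integral>\<^sup>+ \<omega>. ennreal (Y_stop X H (\<lambda>\<omega>'. min (\<zeta> \<omega>') (enat (H \<omega>' + 1))) \<omega>) \<partial>M) = V_Y M X H"
      using g0 by blast
  next
    fix m assume m: "supp_sup M H = enat m"
    show "let \<zeta> = BI_rule M X H m in
           \<zeta> \<in> T_B M X \<and> (\<integral>\<^sup>+ \<omega>. ennreal (Z_stop M X H \<zeta> \<omega>) \<partial>M) = V_Z M X H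
         \<and> (\<lambda>\<omega>. min (\<zeta> \<omega>) (enat (H \<omega> + 1))) \<in> T_star M X H
         \<and> (\<integral>\<^sup>+ \<omega>. ennreal (Y_stop X H (\<lambda>\<omega>'. min (\<zeta> \<omega>') (enat (H \<omega>' + 1))) \<omega>) \<partial>M) = V_Y M X H"
      unfolding Let_def by (rule good[OF BI_T_B BI_good[OF m]])
  next
    fix V assume "supp_sup M H = \<infinity>" and V: "is_snell_envelope M X H V"
    show "let \<zeta> = snell_rule M X H V in
           \<zeta> \<in> T_B M X \<and> (\<integral>\<^sup>+ \<omega>. ennreal (Z_stop M X H \<zeta> \<omega>) \<partial>M) = V_Z M X H
         \<and> (\<lambda>\<omega>. min (\<zeta> \<omega>) (enat (H \<omega> + 1))) \<in> T_star M X H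
         \<and> (\<integral>\<^sup>+ \<omega>. ennreal (Y_stop X H (\<lambda>\<omega>'. min (\<zeta> \<omega>') (enat (H \<omega>' + 1))) \<omega>) \<partial>M) = V_Y M X H"
      unfolding Let_def by (rule good[OF snell_T_B snell_good[OF V]])
  qed
qed


end
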